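(* Let $k\in\mathbb T^2$ and $\lambda<\mathfrak z(k)$. Then for all $\mathrm U\in[0,\infty)$, $$0\le\mathfrak T(\mathrm U,k,\lambda)-\mathfrak T(\infty,k,\lambda)\le\frac{R_{\mathfrak d,\mathfrak d}}{1+\mathrm UR_{\mathfrak s,\mathfrak s}},$$ where $\mathfrak T(\infty,k,\lambda):=R_{\mathfrak s,\mathfrak s}^{-1}\big(R_{\mathfrak d,\mathfrak d}R_{\mathfrak s,\mathfrak s}-|R_{\mathfrak s,\mathfrak d}|^2\big)\ge0$.
   Context: Notation: $\mathbb T^2=[-\pi,\pi)^2$ with normalized Haar measure $\nu$; $L^2(\mathbb T^2)=L^2(\mathbb T^2,\nu)$, scalar product antilinear in the first argument. For $f\in\ell^1(\mathbb Z^2)$, $\hat f(k)=\sum_{x}e^{ik\cdot x}f(x)$, $k\in\mathbb R^2$. $\hat{\mathfrak e}_x(p)=e^{ip\cdot x}$; $P_x$ the orthogonal projection onto $\mathbb C\hat{\mathfrak e}_x$; $M_g$ multiplication by $g$; $\cos(q):=\cos q_1+\cos q_2$. Data: $\epsilon\ge0$; $\mathrm u:\mathbb Z^2\to[0,\infty)$, $\mathfrak p_1,\mathfrak p_2:\mathbb Z^2\to\mathbb R$, invariant under $90^\circ$-rotations, $\mathrm u$ absolutely summable, $\sum_z e^{\alpha_0|z|}|\mathfrak p_j(z)|<\infty$ for some $\alpha_0>0$, $\mathfrak p_2(z)=0$ for $z\notin(2\mathbb Z)^2$, $\mathfrak p_1+\mathfrak p_2\neq0$, and for every $k$ some $x$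 with $\mathfrak p_2(x)\neq-e^{ik\cdot x/2}\mathfrak p_1(x)$. For $k,p\in\mathbb T^2$: $\mathfrak f(k)(p)=\epsilon(4-\cos(p+k)-\cos p)$, $\mathfrak d(k)(p)=\hat{\mathfrak p}_1(k+p)+\hat{\mathfrak p}_2(k/2+p)$, $\mathfrak z(k)=4\epsilon-2\epsilon\cos(k/2)$. $B_{1,1}(k)=M_{\mathfrak f(k)}+\sum_x\mathrm u(x)P_x$, $A_{1,1}(\mathrm U,k)=B_{1,1}(k)+\mathrm UP_0$; $\mathfrak T(\mathrm U,k,\lambda):=\langle\mathfrak d(k),(A_{1,1}(\mathrm U,k)-\lambda\mathfrak 1)^{-1}\mathfrak d(k)\rangle$ for $\mathrm U\ge0$. Let $\mathfrak s$ be the constant function $1$ and, with $G:=(B_{1,1}(k)-\lambda\mathfrak 1)^{-1}$: $R_{\mathfrak s,\mathfrak s}=\langle\mathfrak s,G\mathfrak s\rangle$, $R_{\mathfrak s,\mathfrak d}=\langle\mathfrak s,G\mathfrak d(k)\rangle$, $R_{\mathfrak d,\mathfrak d}=\langle\mathfrak d(k),G\mathfrak d(k)\rangle$. *)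

theory Defs
  imports "HOL-Analysis.Analysis"
begin

text \<open>Points of the torus are represented by pairs of reals in the fundamental
domain [-pi,pi) x [-pi,pi); lattice points by pairs of integers.
Elements of L^2(T^2) are represented by complex functions on real x real,
only their values on the fundamental domain matter.\<close>

definition T2 :: "(real \<times> real) set" where
  "T2 = {-pi..<pi} \<times> {-pi..<pi}"

definition dotp :: "real \<times> real \<Rightarrow> int \<times> int \<Rightarrow> real" where
  "dotp k x = fst k * of_int (fst x) + snd k * of_int (snd x)"

definition znorm :: "int \<times> int \<Rightarrow> real" where
  "znorm z = sqrt (of_int (fst z) ^ 2 + of_int (snd z) ^ 2)"

definition rot90 :: "int \<times> int \<Rightarrow> int \<times> int" where
  "rot90 z = (- snd z, fst z)"

definition fhat :: "(int \<times> int \<Rightarrow> real) \<Rightarrow> real \<times> real \<Rightarrow> complex" where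
  "fhat f k = (\<Sum>\<^sub>\<infinity>x\<in>UNIV. exp (\<i> * of_real (dotp k x)) * of_real (f x))"

definition cos2 :: "real \<times> real \<Rightarrow> real" where
  "cos2 q = cos (fst q) + cos (snd q)"

definition half :: "real \<times> real \<Rightarrow> real \<times> real" where
  "half k = (fst k / 2, snd k / 2)"

definition ehat :: "int \<times> int \<Rightarrow> real \<times> real \<Rightarrow> complex" where
  "ehat x p = exp (\<i> * of_real (dotp p x))"

definition sqint :: "(real \<times> real \<Rightarrow> complex) \<Rightarrow> bool" where
  "sqint g \<longleftrightarrow> g \<in> borel_measurable lborel \<and>
     set_integrable lborel T2 (\<lambda>p. (cmod (g p))\<^sup>2)"

definition l2inner :: "(real \<times> real \<Rightarrow> complex) \<Rightarrow> (real \<times> real \<Rightarrow> complex) \<Rightarrow> complex" where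
  "l2inner f g = of_real (1 / (4 * pi\<^sup>2)) * (LINT p:T2|lborel. cnj (f p) * g p)"

definition ffk :: "real \<Rightarrow> real \<times> real \<Rightarrow> real \<times> real \<Rightarrow> real" where
  "ffk eps k p = eps * (4 - cos2 (p + k) - cos2 p)"

definition ddk :: "(int \<times> int \<Rightarrow> real) \<Rightarrow> (int \<times> int \<Rightarrow> real) \<Rightarrow> real \<times> real \<Rightarrow> real \<times> real \<Rightarrow> complex" where
  "ddk p1 p2 k p = fhat p1 (k + p) + fhat p2 (half k + p)"

definition zzk :: "real \<Rightarrow> real \<times> real \<Rightarrow> real" where
  "zzk eps k = 4 * eps - 2 * eps * cos2 (half k)"

definition Aop :: "real \<Rightarrow> (int \<times> int \<Rightarrow> real) \<Rightarrow> real \<Rightarrow> real \<times> real \<Rightarrow>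
    (real \<times> real \<Rightarrow> complex) \<Rightarrow> real \<times> real \<Rightarrow> complex" where
  "Aop eps u U k g p = of_real (ffk eps k p) * g p
     + (\<Sum>\<^sub>\<infinity>x\<in>UNIV. of_real (u x) * l2inner (ehat x) g * ehat x p)
     + of_real U * l2inner (ehat (0,0)) g * ehat (0,0) p"

text \<open>Resolvent form <f, (A_{1,1}(U,k) - lambda)^{-1} h>: the value <f, g> where
g in L^2 solves (A_{1,1}(U,k) - lambda) g = h (nu-a.e. on T^2).\<close>
definition rform :: "real \<Rightarrow> (int \<times> int \<Rightarrow> real) \<Rightarrow> real \<Rightarrow> real \<times> real \<Rightarrow> real \<Rightarrow>
    (real \<times> real \<Rightarrow> complex) \<Rightarrow> (real \<times> real \<Rightarrow> complex) \<Rightarrow> complex" where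
  "rform eps u U k lam f h = (THE c. \<exists>g. sqint g \<and>
      (AE p in lborel. p \<in> T2 \<longrightarrow> Aop eps u U k g p - of_real lam * g p = h p) \<and>
      c = l2inner f g)"

definition TT :: "real \<Rightarrow> (int \<times> int \<Rightarrow> real) \<Rightarrow> (int \<times> int \<Rightarrow> real) \<Rightarrow> (int \<times> int \<Rightarrow> real)
    \<Rightarrow> real \<Rightarrow> real \<times> real \<Rightarrow> real \<Rightarrow> complex" where
  "TT eps u p1 p2 U k lam = rform eps u U k lam (ddk p1 p2 k) (ddk p1 p2 k)"

definition sone :: "real \<times> real \<Rightarrow> complex" where
  "sone p = 1"

definition Rss where "Rss eps u k lam = rform eps u 0 k lam sone sone"
definition Rsd where "Rsd eps u p1 p2 k lam = rform eps u 0 k lam sone (ddk p1 p2 k)"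
definition Rdd where "Rdd eps u p1 p2 k lam = rform eps u 0 k lam (ddk p1 p2 k) (ddk p1 p2 k)"

definition Tinf where
  "Tinf eps u p1 p2 k lam =
     (Rdd eps u p1 p2 k lam * Rss eps u k lam - of_real ((cmod (Rsd eps u p1 p2 k lam))\<^sup>2))
       / Rss eps u k lam"

end

theory Submission
  imports Defs
begin
definition NN :: "(real \<times> real) measure" where "NN = restrict_space lborel T2"
definition kap :: real where "kap = 1 / (4 * pi\<^sup>2)"

lemma T2_sets[measurable]: "T2 \<in> sets lborel"
  unfolding T2_def
  by (metis lborel_prod sets_lborel atLeastLessThan_borel pair_measureI)

lemma T2_emeasure: "emeasure lborel T2 = ennreal (4 * pi\<^sup>2)"
proof -
  have "emeasure lborel T2 = emeasure (lborel \<Otimes>\<^sub>M lborel) ({-pi..<pi} \<times> {-pi..<pi::real})"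
    by (simp add: T2_def lborel_prod)
  also have "\<dots> = emeasure lborel {-pi..<pi::real} * emeasure lborel {-pi..<pi::real}"
    by (intro sigma_finite_measure.emeasure_pair_measure_Times) (auto simp: lborel.sigma_finite_measure_axioms)
  also have "\<dots> = ennreal (4 * pi\<^sup>2)"
    by (simp add: ennreal_mult'[symmetric] power2_eq_square)
  finally show ?thesis .
qed

lemma space_NN[simp]: "space NN = T2"
  by (simp add: NN_def space_restrict_space)

lemma sets_NN_T2: "T2 \<inter> space lborel \<in> sets lborel" using T2_sets by simp

lemma emeasure_NN: "emeasure NN T2 = ennreal (4 * pi\<^sup>2)"
  using T2_sets by (simp add: NN_def emeasure_restrict_space T2_emeasure space_restrict_space)

lemma measure_NN: "measure NN T2 = 4 * pi\<^sup>2"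
  using emeasure_NN by (simp add: measure_def)

interpretation NNf: finite_measure NN
  by (rule finite_measureI) (simp add: emeasure_NN)

lemma kap_pos: "kap > 0" by (simp add: kap_def)
lemma kap_meas: "kap * measure NN T2 = 1"
  by (simp add: kap_def measure_NN)

lemma integral_NN: fixes f :: "real \<times> real \<Rightarrow> 'b::{banach, second_countable_topology}"
  shows "integral\<^sup>L NN f = (LINT p:T2|lborel. f p)"
  unfolding NN_def set_lebesgue_integral_def
  by (rule integral_restrict_space) (use T2_sets in simp)

lemma integrable_NN: fixes f :: "real \<times> real \<Rightarrow> 'b::{banach, second_countable_topology}"
  shows "integrable NN f \<longleftrightarrow> set_integrable lborel T2 f"
  unfolding NN_def set_integrable_def
  by (rule integrable_restrict_space) (use T2_sets in simp)

lemma l2inner_NN: "l2inner f g = kap * integral\<^sup>L NN (\<lambda>p. cnj (f p) * g p)"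
  by (simp add: l2inner_def integral_NN kap_def)

lemma meas_NN: "f \<in> borel_measurable lborel \<Longrightarrow> f \<in> borel_measurable NN"
  unfolding NN_def by (rule measurable_restrict_space1)

lemma AE_NN: "(AE p in lborel. p \<in> T2 \<longrightarrow> P p) \<longleftrightarrow> (AE p in NN. P p)"
  unfolding NN_def by (subst AE_restrict_space_iff) (use T2_sets in auto)

abbreviation asum :: "(int \<times> int \<Rightarrow> 'a::real_normed_vector) \<Rightarrow> bool" where
  "asum f \<equiv> (\<lambda>x. norm (f x)) summable_on UNIV"

definition enum :: "nat \<Rightarrow> int \<times> int" where "enum = from_nat_into (UNIV :: (int\<times>int) set)"

lemma bij_enum: "bij_betw enum UNIV UNIV"
proof -
  have "infinite (UNIV :: (int\<times>int) set)"
    by (simp add: finite_prod infinite_UNIV_int)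
  then show ?thesis unfolding enum_def by (intro bij_betw_from_nat_into) auto
qed

lemma infsum_enum:
  fixes f :: "int \<times> int \<Rightarrow> 'a::banach"
  assumes "asum f"
  shows "summable (\<lambda>n. norm (f (enum n)))" and "infsum f UNIV = (\<Sum>n. f (enum n))"
proof -
  have "(\<lambda>n. norm (f (enum n))) summable_on UNIV"
    using summable_on_reindex_bij_betw[OF bij_enum, of "\<lambda>x. norm (f x)"] assms by simp
  then show s: "summable (\<lambda>n. norm (f (enum n)))" by (rule summable_on_imp_summable)
  then have "summable (\<lambda>n. f (enum n))" by (rule summable_norm_cancel)
  then have "((\<lambda>n. f (enum n)) has_sum (\<Sum>n. f (enum n))) UNIV"
    by (intro norm_summable_imp_has_sum[OF s]) (simp add: summable_sums)
  then have "infsum (\<lambda>n. f (enum n)) UNIV = (\<Sum>n. f (enum n))" by (rule infsumI)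
  then show "infsum f UNIV = (\<Sum>n. f (enum n))"
    using infsum_reindex_bij_betw[OF bij_enum, of f] by simp
qed

lemma abs_summable_bounded:
  fixes a :: "int \<times> int \<Rightarrow> complex" and b :: "int \<times> int \<Rightarrow> complex"
  assumes "asum a" "\<And>x. norm (b x) \<le> C"
  shows "asum (\<lambda>x. a x * b x)"
proof (rule Infinite_Sum.abs_summable_on_comparison_test)
  show "asum (\<lambda>x. a x * C)"
    using summable_on_cmult_left[OF assms(1), of "\<bar>C\<bar>"] by (simp add: norm_mult)
  show "norm (a x * b x) \<le> norm (a x * C)" for x
    using assms(2)[of x] by (auto simp: norm_mult intro!: mult_left_mono)
qed

lemma sum_meas:
  fixes a :: "int \<times> int \<Rightarrow> complex" and \<phi> :: "int \<times> int \<Rightarrow> 'p \<Rightarrow> complex"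
  assumes a: "asum a" and m: "\<And>x. \<phi> x \<in> borel_measurable M"
    and b: "\<And>x p. norm (\<phi> x p) \<le> 1"
  shows "(\<lambda>p. \<Sum>\<^sub>\<infinity>x. a x * \<phi> x p) \<in> borel_measurable M"
proof -
  have "(\<lambda>p. \<Sum>n. a (enum n) * \<phi> (enum n) p) \<in> borel_measurable M"
    using m by measurable
  moreover have "(\<Sum>\<^sub>\<infinity>x. a x * \<phi> x p) = (\<Sum>n. a (enum n) * \<phi> (enum n) p)" for p
    by (rule infsum_enum(2)[OF abs_summable_bounded[OF a b]])
  ultimately show ?thesis by simp
qed

lemma sum_bound:
  fixes a :: "int \<times> int \<Rightarrow> complex" and \<phi> :: "int \<times> int \<Rightarrow> 'p \<Rightarrow> complex"
  assumes a: "asum a" and b: "\<And>x p. norm (\<phi> x p) \<le> 1"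
  shows "norm (\<Sum>\<^sub>\<infinity>x. a x * \<phi> x p) \<le> (\<Sum>\<^sub>\<infinity>x. norm (a x))"
proof -
  have "norm (\<Sum>\<^sub>\<infinity>x. a x * \<phi> x p) \<le> (\<Sum>\<^sub>\<infinity>x. norm (a x * \<phi> x p))"
    by (rule norm_infsum_bound[OF abs_summable_bounded[OF a b]])
  also have "\<dots> \<le> (\<Sum>\<^sub>\<infinity>x. norm (a x))"
    apply (rule infsum_mono[OF abs_summable_bounded[OF a b] a])
    using b by (auto simp: norm_mult intro!: mult_left_le)
  finally show ?thesis .
qed

lemma sum_int:
  fixes a :: "int \<times> int \<Rightarrow> complex" and \<phi> :: "int \<times> int \<Rightarrow> 'p \<Rightarrow> complex"
  assumes a: "asum a" and m: "\<And>x. \<phi> x \<in> borel_measurable M"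
    and b: "\<And>x p. norm (\<phi> x p) \<le> 1" and F: "integrable M F"
  shows "integral\<^sup>L M (\<lambda>p. F p * (\<Sum>\<^sub>\<infinity>x. a x * \<phi> x p))
       = (\<Sum>\<^sub>\<infinity>x. a x * integral\<^sup>L M (\<lambda>p. F p * \<phi> x p))"
    and "asum (\<lambda>x. a x * integral\<^sup>L M (\<lambda>p. F p * \<phi> x p))"
proof -
  define C where "C = integral\<^sup>L M (\<lambda>p. norm (F p))"
  have nb: "norm (integral\<^sup>L M (\<lambda>p. F p * \<phi> x p)) \<le> C" for x
  proof -
    have "norm (integral\<^sup>L M (\<lambda>p. F p * \<phi> x p)) \<le> integral\<^sup>L M (\<lambda>p. norm (F p * \<phi> x p))"
      by (rule integral_norm_bound)
    also have "\<dots> \<le> C" unfolding C_def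
    proof (rule integral_mono)
      have bx: "\<And>p. norm (\<phi> x p) \<le> 1" by (rule b)
      show "integrable M (\<lambda>p. norm (F p * \<phi> x p))"
        apply (rule integrable_norm, rule Bochner_Integration.integrable_bound[of _ "\<lambda>p. norm (F p)"])
        using F m[of x] bx by (auto simp: norm_mult intro!: AE_I2 mult_left_le)
      show "integrable M (\<lambda>p. norm (F p))" using F by simp
      show "norm (F p * \<phi> x p) \<le> norm (F p)" for p
        using bx[of p] by (auto simp: norm_mult intro!: mult_left_le)
    qed
    finally show ?thesis .
  qed
  show abs2: "asum (\<lambda>x. a x * integral\<^sup>L M (\<lambda>p. F p * \<phi> x p))"
    by (rule abs_summable_bounded[OF a nb])
  have sa: "summable (\<lambda>n. norm (a (enum n)))" by (rule infsum_enum(1)[OF a])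
  define f where "f n p = F p * (a (enum n) * \<phi> (enum n) p)" for n p
  have fi: "integrable M (f n)" for n
  proof -
    have bx: "\<And>p. norm (\<phi> (enum n) p) \<le> 1" by (rule b)
    have 2: "norm (F p) * (norm (a (enum n)) * norm (\<phi> (enum n) p)) \<le> norm (F p) * norm (a (enum n))" for p
    proof -
      have 1: "norm (a (enum n)) * norm (\<phi> (enum n) p) \<le> norm (a (enum n))"
        by (rule mult_left_le[OF bx]) simp
      show ?thesis by (rule mult_left_mono[OF 1]) simp
    qed
    show ?thesis unfolding f_def
      apply (rule Bochner_Integration.integrable_bound[of _ "\<lambda>p. norm (F p) * norm (a (enum n))"])
      using F m[of "enum n"] 2 by (auto simp: norm_mult intro!: AE_I2)
  qed
  have fb: "norm (f n p) \<le> norm (F p) * norm (a (enum n))" for n p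
  proof -
    have 1: "norm (a (enum n)) * norm (\<phi> (enum n) p) \<le> norm (a (enum n))"
      by (rule mult_left_le[OF b]) simp
    show ?thesis unfolding f_def norm_mult by (rule mult_left_mono[OF 1]) simp
  qed
  have s1: "AE p in M. summable (\<lambda>n. norm (f n p))"
  proof (rule AE_I2)
    fix p
    show "summable (\<lambda>n. norm (f n p))"
      by (rule summable_comparison_test'[of "\<lambda>n. norm (F p) * norm (a (enum n))"])
         (use summable_mult[OF sa] fb in auto)
  qed
  have s2: "summable (\<lambda>n. integral\<^sup>L M (\<lambda>p. norm (f n p)))"
  proof (rule summable_comparison_test'[of "\<lambda>n. C * norm (a (enum n))"])
    show "summable (\<lambda>n. C * norm (a (enum n)))" by (rule summable_mult[OF sa])
    show "norm (integral\<^sup>L M (\<lambda>p. norm (f n p))) \<le> C * norm (a (enum n))" for n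
    proof -
      have "integral\<^sup>L M (\<lambda>p. norm (f n p)) \<le> integral\<^sup>L M (\<lambda>p. norm (F p) * norm (a (enum n)))"
        by (intro integral_mono fi integrable_norm integrable_mult_left F fb)
      also have "\<dots> = C * norm (a (enum n))" by (simp add: C_def)
      finally show ?thesis by (simp add: integral_nonneg_AE)
    qed
  qed
  have "integral\<^sup>L M (\<lambda>p. F p * (\<Sum>\<^sub>\<infinity>x. a x * \<phi> x p)) = integral\<^sup>L M (\<lambda>p. \<Sum>n. f n p)"
  proof (rule Bochner_Integration.integral_cong[OF refl])
    fix p
    have "(\<Sum>\<^sub>\<infinity>x. a x * \<phi> x p) = (\<Sum>n. a (enum n) * \<phi> (enum n) p)"
      by (rule infsum_enum(2)[OF abs_summable_bounded[OF a b]])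
    moreover have "summable (\<lambda>n. a (enum n) * \<phi> (enum n) p)"
      by (rule summable_norm_cancel[OF infsum_enum(1)[OF abs_summable_bounded[OF a b]]])
    ultimately show "F p * (\<Sum>\<^sub>\<infinity>x. a x * \<phi> x p) = (\<Sum>n. f n p)"
      unfolding f_def by (simp add: suminf_mult)
  qed
  also have "\<dots> = (\<Sum>n. integral\<^sup>L M (f n))"
    by (rule integral_suminf[OF fi s1 s2])
  also have "\<dots> = (\<Sum>n. a (enum n) * integral\<^sup>L M (\<lambda>p. F p * \<phi> (enum n) p))"
  proof (rule suminf_cong)
    fix n
    have "(\<lambda>p. F p * (a (enum n) * \<phi> (enum n) p)) = (\<lambda>p. a (enum n) * (F p * \<phi> (enum n) p))"
      by (rule ext) (rule mult.left_commute)
    then show "integral\<^sup>L M (f n) = a (enum n) * integral\<^sup>L M (\<lambda>p. F p * \<phi> (enum n) p)"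
      unfolding f_def by (simp only: integral_mult_right_zero)
  qed
  also have "\<dots> = (\<Sum>\<^sub>\<infinity>x. a x * integral\<^sup>L M (\<lambda>p. F p * \<phi> x p))"
    by (rule infsum_enum(2)[OF abs2, symmetric])
  finally show "integral\<^sup>L M (\<lambda>p. F p * (\<Sum>\<^sub>\<infinity>x. a x * \<phi> x p))
       = (\<Sum>\<^sub>\<infinity>x. a x * integral\<^sup>L M (\<lambda>p. F p * \<phi> x p))" .
qed

definition Lsp :: "(real \<times> real \<Rightarrow> complex) \<Rightarrow> bool" where
  "Lsp g \<longleftrightarrow> g \<in> borel_measurable NN \<and> integrable NN (\<lambda>p. (cmod (g p))\<^sup>2)"

lemma meas_cnj[measurable]: "f \<in> borel_measurable M \<Longrightarrow> (\<lambda>x. cnj (f x)) \<in> borel_measurable M"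
  by (rule borel_measurable_continuous_on[OF continuous_on_cnj[OF continuous_on_id]])

lemma Lsp_meas: "Lsp g \<Longrightarrow> g \<in> borel_measurable NN" by (simp add: Lsp_def)

lemma Lsp_bounded:
  assumes "g \<in> borel_measurable NN" "\<And>p. p \<in> T2 \<Longrightarrow> cmod (g p) \<le> B"
  shows "Lsp g"
  unfolding Lsp_def
proof
  show "g \<in> borel_measurable NN" by fact
  show "integrable NN (\<lambda>p. (cmod (g p))\<^sup>2)"
  proof (rule Bochner_Integration.integrable_bound[of _ "\<lambda>_. B\<^sup>2"])
    show "integrable NN (\<lambda>_. B\<^sup>2)" by simp
    show "(\<lambda>p. (cmod (g p))\<^sup>2) \<in> borel_measurable NN" using assms(1) by measurable
    show "AE p in NN. norm ((cmod (g p))\<^sup>2) \<le> norm (B\<^sup>2)"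
      using assms(2) by (intro AE_I2) (auto intro!: power_mono simp: abs_le_square_iff)
  qed
qed

lemma prod_bound: "cmod (cnj a * b) \<le> (cmod a)\<^sup>2 + (cmod b)\<^sup>2"
proof -
  have h1: "0 \<le> (cmod a - cmod b)\<^sup>2" by simp
  have h1': "(cmod a - cmod b)\<^sup>2 = (cmod a)\<^sup>2 + (cmod b)\<^sup>2 - 2 * cmod a * cmod b"
    by (rule power2_diff)
  have h2: "0 \<le> cmod a * cmod b" by simp
  have "cmod a * cmod b \<le> (cmod a)\<^sup>2 + (cmod b)\<^sup>2" using h1 h1' h2 by linarith
  then show ?thesis by (simp add: norm_mult)
qed

lemma Lsp_prod: assumes "Lsp f" "Lsp g" shows "integrable NN (\<lambda>p. cnj (f p) * g p)"
proof (rule Bochner_Integration.integrable_bound[of _ "\<lambda>p. (cmod (f p))\<^sup>2 + (cmod (g p))\<^sup>2"])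
  show "integrable NN (\<lambda>p. (cmod (f p))\<^sup>2 + (cmod (g p))\<^sup>2)"
    using assms by (simp add: Lsp_def)
  have [measurable]: "f \<in> borel_measurable NN" "g \<in> borel_measurable NN" using assms by (auto simp: Lsp_def)
  show "(\<lambda>p. cnj (f p) * g p) \<in> borel_measurable NN" by measurable
  show "AE p in NN. norm (cnj (f p) * g p) \<le> norm ((cmod (f p))\<^sup>2 + (cmod (g p))\<^sup>2)"
    by (intro AE_I2) (use prod_bound in auto)
qed

lemma Lsp_const: "Lsp (\<lambda>_. c)"
  by (rule Lsp_bounded[of _ "cmod c"]) auto

lemma Lsp_int: assumes "Lsp g" shows "integrable NN g"
  using Lsp_prod[OF Lsp_const[of 1] assms] by simp

lemma Lsp_add: assumes "Lsp f" "Lsp g" shows "Lsp (\<lambda>p. f p + g p)"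
  unfolding Lsp_def
proof
  have [measurable]: "f \<in> borel_measurable NN" "g \<in> borel_measurable NN" using assms by (auto simp: Lsp_def)
  show "(\<lambda>p. f p + g p) \<in> borel_measurable NN" by measurable
  show "integrable NN (\<lambda>p. (cmod (f p + g p))\<^sup>2)"
  proof (rule Bochner_Integration.integrable_bound[of _ "\<lambda>p. 2 * ((cmod (f p))\<^sup>2 + (cmod (g p))\<^sup>2)"])
    show "integrable NN (\<lambda>p. 2 * ((cmod (f p))\<^sup>2 + (cmod (g p))\<^sup>2))"
      using assms by (simp add: Lsp_def)
    show "(\<lambda>p. (cmod (f p + g p))\<^sup>2) \<in> borel_measurable NN" using assms by (simp add: Lsp_def)
    have "(cmod (a + b))\<^sup>2 \<le> 2 * ((cmod a)\<^sup>2 + (cmod b)\<^sup>2)" for a b :: complex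
    proof -
      have "(cmod (a + b))\<^sup>2 \<le> (cmod a + cmod b)\<^sup>2"
        by (intro power_mono norm_triangle_ineq) simp
      also have "\<dots> \<le> 2 * ((cmod a)\<^sup>2 + (cmod b)\<^sup>2)"
        using sum_squares_ge_zero[of "cmod a - cmod b" 0] by (simp add: power2_eq_square algebra_simps)
      finally show ?thesis .
    qed
    then show "AE p in NN. norm ((cmod (f p + g p))\<^sup>2) \<le> norm (2 * ((cmod (f p))\<^sup>2 + (cmod (g p))\<^sup>2))"
      by (intro AE_I2) auto
  qed
qed

lemma Lsp_mult: assumes "Lsp g" "m \<in> borel_measurable NN" "\<And>p. p \<in> T2 \<Longrightarrow> cmod (m p) \<le> B"
  shows "Lsp (\<lambda>p. m p * g p)"
  unfolding Lsp_def
proof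
  have [measurable]: "m \<in> borel_measurable NN" "g \<in> borel_measurable NN" using assms by (auto simp: Lsp_def)
  show "(\<lambda>p. m p * g p) \<in> borel_measurable NN" by measurable
  show "integrable NN (\<lambda>p. (cmod (m p * g p))\<^sup>2)"
  proof (rule Bochner_Integration.integrable_bound[of _ "\<lambda>p. B\<^sup>2 * (cmod (g p))\<^sup>2"])
    show "integrable NN (\<lambda>p. B\<^sup>2 * (cmod (g p))\<^sup>2)"
      using assms by (simp add: Lsp_def)
    show "(\<lambda>p. (cmod (m p * g p))\<^sup>2) \<in> borel_measurable NN" using assms by (simp add: Lsp_def)
    show "AE p in NN. norm ((cmod (m p * g p))\<^sup>2) \<le> norm (B\<^sup>2 * (cmod (g p))\<^sup>2)"
    proof (rule AE_I2)
      fix p assume "p \<in> space NN"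
      then have "cmod (m p) \<le> B" using assms(3) by simp
      then have "(cmod (m p))\<^sup>2 \<le> B\<^sup>2" by (intro power_mono) auto
      then show "norm ((cmod (m p * g p))\<^sup>2) \<le> norm (B\<^sup>2 * (cmod (g p))\<^sup>2)"
        by (simp add: norm_mult power_mult_distrib mult_right_mono)
    qed
  qed
qed

lemma Lsp_scale: assumes "Lsp g" shows "Lsp (\<lambda>p. c * g p)"
  using Lsp_mult[OF assms, of "\<lambda>_. c" "cmod c"] by simp

lemma Lsp_diff: assumes "Lsp f" "Lsp g" shows "Lsp (\<lambda>p. f p - g p)"
  using Lsp_add[OF assms(1) Lsp_scale[OF assms(2), of "-1"]] by simp

lemma Lsp_lincomb: assumes "Lsp f" "Lsp g" shows "Lsp (\<lambda>p. f p - t * g p)"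
  using Lsp_diff[OF assms(1) Lsp_scale[OF assms(2)]] by simp

lemma Lsp_norm: assumes "Lsp g" shows "Lsp (\<lambda>p. complex_of_real (cmod (g p)))"
proof -
  have [measurable]: "g \<in> borel_measurable NN" using assms by (auto simp: Lsp_def)
  have "(\<lambda>p. complex_of_real (cmod (g p))) \<in> borel_measurable NN" by measurable
  then show ?thesis using assms by (simp add: Lsp_def)
qed

lemma ip_add: assumes "Lsp f" "Lsp g" "Lsp h"
  shows "l2inner f (\<lambda>p. g p + h p) = l2inner f g + l2inner f h"
  using Lsp_prod[OF assms(1,2)] Lsp_prod[OF assms(1,3)]
  by (simp add: l2inner_NN distrib_left)

lemma ip_scale: "l2inner f (\<lambda>p. c * g p) = c * l2inner f g"
proof -
  have "(\<lambda>p. cnj (f p) * (c * g p)) = (\<lambda>p. c * (cnj (f p) * g p))"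
    by (rule ext) (rule mult.left_commute)
  then show ?thesis by (simp add: l2inner_NN)
qed

lemma ip_lincomb: assumes "Lsp f" "Lsp g" "Lsp h"
  shows "l2inner f (\<lambda>p. g p - t * h p) = l2inner f g - t * l2inner f h"
  using ip_add[OF assms(1,2) Lsp_scale[OF assms(3), of "-t"]] ip_scale[of f "-t" h] by simp

lemma ip_diff: assumes "Lsp f" "Lsp g" "Lsp h"
  shows "l2inner f (\<lambda>p. g p - h p) = l2inner f g - l2inner f h"
  using ip_lincomb[OF assms, of 1] by simp

lemma ip_cnj: "l2inner g f = cnj (l2inner f g)"
proof -
  have "integral\<^sup>L NN (\<lambda>p. cnj (g p) * f p) = integral\<^sup>L NN (\<lambda>p. cnj (cnj (f p) * g p))"
    by (rule Bochner_Integration.integral_cong) auto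
  also have "\<dots> = cnj (integral\<^sup>L NN (\<lambda>p. cnj (f p) * g p))" by (rule Bochner_Integration.integral_cnj)
  finally show ?thesis by (simp add: l2inner_NN)
qed

lemma ip_self: "l2inner g g = of_real (kap * integral\<^sup>L NN (\<lambda>p. (cmod (g p))\<^sup>2))"
proof -
  have "(\<lambda>p. cnj (g p) * g p) = (\<lambda>p. of_real ((cmod (g p))\<^sup>2))"
    by (rule ext) (metis complex_norm_square mult.commute)
  then show ?thesis unfolding l2inner_NN by (simp only: integral_complex_of_real of_real_mult)
qed

lemma ip_self_nonneg: "0 \<le> Re (l2inner g g)"
  by (simp add: ip_self kap_pos less_imp_le integral_nonneg_AE)

lemma ip_cong_AE: assumes "AE p in NN. g p = h p" "Lsp f" "Lsp g" "Lsp h" shows "l2inner f g = l2inner f h"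
proof -
  have [measurable]: "f \<in> borel_measurable NN" "g \<in> borel_measurable NN" "h \<in> borel_measurable NN"
    using assms by (auto simp: Lsp_def)
  show ?thesis
    unfolding l2inner_NN using assms(1) by (intro arg_cong[where f="\<lambda>x. _ * x"] integral_cong_AE) auto
qed

lemma ip_zero_AE: assumes "Lsp g" "Re (l2inner g g) = 0" shows "AE p in NN. g p = 0"
proof -
  have "integral\<^sup>L NN (\<lambda>p. (cmod (g p))\<^sup>2) = 0"
    using assms(2) kap_pos by (simp add: ip_self)
  then have "AE p in NN. (cmod (g p))\<^sup>2 = 0"
    using assms(1) by (subst integral_nonneg_eq_0_iff_AE[symmetric]) (auto simp: Lsp_def)
  then show ?thesis by simp
qed

lemma cs_num:
  fixes a b c :: complex
  assumes "\<And>t. 0 \<le> Re a - 2 * Re (t * b) + (cmod t)\<^sup>2 * Re c" and "0 \<le> Re c"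
  shows "(cmod b)\<^sup>2 \<le> Re a * Re c"
proof (cases "Re c = 0")
  case True
  have "b = 0"
  proof (rule ccontr)
    assume "b \<noteq> 0"
    then have nb: "(cmod b)\<^sup>2 > 0" by simp
    define s where "s = (\<bar>Re a\<bar> + 1) / (cmod b)\<^sup>2"
    have cb: "cnj b * b = of_real ((cmod b)\<^sup>2)" by (metis complex_norm_square mult.commute)
    have "Re (of_real s * cnj b * b) = s * (cmod b)\<^sup>2"
      by (simp only: mult.assoc cb Re_complex_of_real of_real_mult[symmetric])
    moreover have "s * (cmod b)\<^sup>2 = \<bar>Re a\<bar> + 1" unfolding s_def using nb by simp
    ultimately show False using assms(1)[of "of_real s * cnj b"] True by simp
  qed
  then show ?thesis using True by simp
next
  case False
  then have c: "Re c > 0" using assms(2) by simp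
  define t where "t = cnj b / of_real (Re c)"
  have "Re (t * b) = (cmod b)\<^sup>2 / Re c"
    unfolding t_def using cmod_power2[of b] by (simp add: power2_eq_square)
  moreover have "(cmod t)\<^sup>2 = (cmod b)\<^sup>2 / (Re c)\<^sup>2"
    unfolding t_def by (simp add: norm_divide power_divide)
  ultimately have "0 \<le> Re a - 2 * ((cmod b)\<^sup>2 / Re c) + (cmod b)\<^sup>2 / (Re c)\<^sup>2 * Re c"
    using assms(1)[of t] by simp
  also have "\<dots> = Re a - (cmod b)\<^sup>2 / Re c" using c by (simp add: power2_eq_square field_simps)
  finally show ?thesis using c by (simp add: field_simps)
qed

lemma cs_form:
  fixes F :: "(real \<times> real \<Rightarrow> complex) \<Rightarrow> (real \<times> real \<Rightarrow> complex) \<Rightarrow> complex"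
  assumes lin: "\<And>x y z t. Lsp x \<Longrightarrow> Lsp y \<Longrightarrow> Lsp z \<Longrightarrow> F z (\<lambda>p. x p - t * y p) = F z x - t * F z y"
    and herm: "\<And>x y. Lsp x \<Longrightarrow> Lsp y \<Longrightarrow> F y x = cnj (F x y)"
    and pos: "\<And>x. Lsp x \<Longrightarrow> 0 \<le> Re (F x x)"
    and x: "Lsp x" and y: "Lsp y"
  shows "(cmod (F x y))\<^sup>2 \<le> Re (F x x) * Re (F y y)"
proof (rule cs_num)
  show "0 \<le> Re (F y y)" by (rule pos[OF y])
  fix t
  define z where "z = (\<lambda>p. x p - t * y p)"
  have z: "Lsp z" unfolding z_def by (rule Lsp_lincomb[OF x y])
  have "F z z = F z x - t * F z y" using lin[OF x y z, of t] by (simp only: z_def[symmetric])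
  also have "F z x = cnj (F x z)" by (rule herm[OF x z])
  also have "F z y = cnj (F y z)" by (rule herm[OF y z])
  also have "F x z = F x x - t * F x y" unfolding z_def by (rule lin[OF x y x])
  also have "F y z = F y x - t * F y y" unfolding z_def by (rule lin[OF x y y])
  also have "F y x = cnj (F x y)" by (rule herm[OF x y])
  finally have "F z z = cnj (F x x - t * F x y) - t * cnj (cnj (F x y) - t * F y y)" .
  then have e1: "F z z = cnj (F x x) - cnj t * cnj (F x y) - t * F x y + (t * cnj t) * cnj (F y y)"
    by (simp add: algebra_simps)
  have tc: "t * cnj t = of_real ((cmod t)\<^sup>2)" by (rule complex_norm_square[symmetric])
  have "Re (F z z) = Re (F x x) - Re (cnj t * cnj (F x y)) - Re (t * F x y) + (cmod t)\<^sup>2 * Re (F y y)"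
    unfolding e1 tc by simp
  moreover have "Re (cnj t * cnj (F x y)) = Re (t * F x y)"
    by simp
  ultimately have "Re (F z z) = Re (F x x) - 2 * Re (t * F x y) + (cmod t)\<^sup>2 * Re (F y y)" by simp
  then show "0 \<le> Re (F x x) - 2 * Re (t * F x y) + (cmod t)\<^sup>2 * Re (F y y)"
    using pos[OF z] by simp
qed

lemma ip_lin_form: "Lsp x \<Longrightarrow> Lsp y \<Longrightarrow> Lsp z \<Longrightarrow> l2inner z (\<lambda>p. x p - t * y p) = l2inner z x - t * l2inner z y"
  by (rule ip_lincomb)

lemma ip_cs: assumes "Lsp x" "Lsp y"
  shows "(cmod (l2inner x y))\<^sup>2 \<le> Re (l2inner x x) * Re (l2inner y y)"
  by (rule cs_form[OF ip_lin_form ip_cnj ip_self_nonneg assms]) auto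

lemma cont_ehat: "continuous_on UNIV (ehat x)"
  unfolding ehat_def[abs_def] dotp_def by (intro continuous_intros)

lemma ehat_meas_lborel[measurable]: "ehat x \<in> borel_measurable lborel"
  using borel_measurable_continuous_onI[OF cont_ehat] by simp

lemma ehat_meas[measurable]: "ehat x \<in> borel_measurable NN"
  by (rule meas_NN[OF ehat_meas_lborel])

lemma norm_ehat[simp]: "cmod (ehat x p) = 1"
  by (simp add: ehat_def norm_exp_i_times)

lemma ehat0[simp]: "ehat (0,0) p = 1"
  by (simp add: ehat_def dotp_def)

lemma Lsp_ehat: "Lsp (ehat x)"
  by (rule Lsp_bounded[of _ 1]) auto

lemma ip_ehat_self: "l2inner (ehat x) (ehat x) = 1"
proof -
  have "l2inner (ehat x) (ehat x) = of_real (kap * integral\<^sup>L NN (\<lambda>p. (cmod (ehat x p))\<^sup>2))"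
    by (rule ip_self)
  also have "\<dots> = of_real (kap * measure NN T2)" by simp
  also have "\<dots> = 1" by (simp add: kap_meas)
  finally show ?thesis .
qed

definition nrm :: "(real \<times> real \<Rightarrow> complex) \<Rightarrow> real" where
  "nrm g = sqrt (Re (l2inner g g))"

lemma nrm_sq: "(nrm g)\<^sup>2 = Re (l2inner g g)"
  by (simp add: nrm_def ip_self_nonneg)

lemma nrm_nonneg: "0 \<le> nrm g" by (simp add: nrm_def ip_self_nonneg)

lemma ip_le_nrm: assumes "Lsp f" "Lsp g" shows "cmod (l2inner f g) \<le> nrm f * nrm g"
proof -
  have "(cmod (l2inner f g))\<^sup>2 \<le> (nrm f * nrm g)\<^sup>2"
    using ip_cs[OF assms] by (simp add: nrm_sq power_mult_distrib)
  then show ?thesis using nrm_nonneg by (meson abs_le_square_iff abs_of_nonneg le_trans abs_ge_self mult_nonneg_nonneg power2_le_imp_le)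
qed

lemma nrm_ehat: "nrm (ehat x) = 1" by (simp add: nrm_def ip_ehat_self)

lemma ip_ehat_bound: assumes "Lsp g" shows "cmod (l2inner (ehat x) g) \<le> nrm g"
  using ip_le_nrm[OF Lsp_ehat assms, of x] by (simp add: nrm_ehat)

definition Kop :: "(int \<times> int \<Rightarrow> real) \<Rightarrow> (real \<times> real \<Rightarrow> complex) \<Rightarrow> real \<times> real \<Rightarrow> complex" where
  "Kop u g p = (\<Sum>\<^sub>\<infinity>x\<in>UNIV. of_real (u x) * l2inner (ehat x) g * ehat x p)"

locale uctx =
  fixes u :: "int \<times> int \<Rightarrow> real"
  assumes u_nonneg: "\<And>x. u x \<ge> 0" and u_summ: "u summable_on UNIV"
begin

definition "Su = infsum u UNIV"

lemma Su_nonneg: "0 \<le> Su" unfolding Su_def by (rule infsum_nonneg) (simp add: u_nonneg)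

lemma asum_u: "asum (\<lambda>x. complex_of_real (u x))"
  using u_summ u_nonneg by simp

lemma asum_coef: assumes "Lsp g" shows "asum (\<lambda>x. of_real (u x) * l2inner (ehat x) g)"
  by (rule abs_summable_bounded[OF asum_u ip_ehat_bound[OF assms]])

lemma infsum_norm_coef: assumes "Lsp g"
  shows "(\<Sum>\<^sub>\<infinity>x. cmod (of_real (u x) * l2inner (ehat x) g)) \<le> Su * nrm g"
proof -
  have "(\<Sum>\<^sub>\<infinity>x. cmod (of_real (u x) * l2inner (ehat x) g)) \<le> (\<Sum>\<^sub>\<infinity>x. u x * nrm g)"
  proof (rule infsum_mono[OF asum_coef[OF assms]])
    show "(\<lambda>x. u x * nrm g) summable_on UNIV" by (rule summable_on_cmult_left[OF u_summ])
    show "cmod (of_real (u x) * l2inner (ehat x) g) \<le> u x * nrm g" for x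
      using ip_ehat_bound[OF assms, of x] u_nonneg[of x]
      by (simp add: norm_mult abs_of_nonneg mult_left_mono)
  qed
  also have "\<dots> = Su * nrm g" unfolding Su_def by (rule infsum_cmult_left) (simp add: u_summ)
  finally show ?thesis .
qed

lemma Kop_meas: assumes "Lsp g" shows "Kop u g \<in> borel_measurable NN"
  unfolding Kop_def[abs_def]
  by (rule sum_meas[OF asum_coef[OF assms] ehat_meas]) simp

lemma Kop_bound: assumes "Lsp g" shows "cmod (Kop u g p) \<le> Su * nrm g"
  unfolding Kop_def
  using sum_bound[OF asum_coef[OF assms], of ehat p] infsum_norm_coef[OF assms] by simp

lemma Lsp_Kop: assumes "Lsp g" shows "Lsp (Kop u g)"
  by (rule Lsp_bounded[OF Kop_meas[OF assms] Kop_bound[OF assms]])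

lemma ip_Kop: assumes "Lsp f" "Lsp g"
  shows "l2inner f (Kop u g) = (\<Sum>\<^sub>\<infinity>x. of_real (u x) * l2inner (ehat x) g * l2inner f (ehat x))"
proof -
  have F: "integrable NN (\<lambda>p. cnj (f p))"
    using Lsp_prod[OF assms(1) Lsp_const[of 1]] by simp
  have "l2inner f (Kop u g) = kap * integral\<^sup>L NN (\<lambda>p. cnj (f p) * Kop u g p)"
    by (rule l2inner_NN)
  also have "integral\<^sup>L NN (\<lambda>p. cnj (f p) * Kop u g p) =
     (\<Sum>\<^sub>\<infinity>x. (of_real (u x) * l2inner (ehat x) g) * integral\<^sup>L NN (\<lambda>p. cnj (f p) * ehat x p))"
    unfolding Kop_def by (rule sum_int(1)[OF asum_coef[OF assms(2)] ehat_meas _ F]) simp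
  also have "kap * \<dots> = (\<Sum>\<^sub>\<infinity>x. kap * ((of_real (u x) * l2inner (ehat x) g) * integral\<^sup>L NN (\<lambda>p. cnj (f p) * ehat x p)))"
    by (rule infsum_cmult_right[symmetric])
       (rule abs_summable_summable[OF sum_int(2)[OF asum_coef[OF assms(2)] ehat_meas _ F]], simp)
  also have "\<dots> = (\<Sum>\<^sub>\<infinity>x. of_real (u x) * l2inner (ehat x) g * l2inner f (ehat x))"
    by (rule infsum_cong) (simp add: l2inner_NN)
  finally show ?thesis .
qed

lemma summ_term: assumes "Lsp g"
  shows "(\<lambda>x. of_real (u x) * l2inner (ehat x) g * ehat x p) summable_on UNIV"
  by (rule abs_summable_summable[OF abs_summable_bounded[OF asum_coef[OF assms], of "\<lambda>x. ehat x p" 1]]) simp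

lemma Kop_lin: assumes "Lsp g" "Lsp h"
  shows "Kop u (\<lambda>p. g p - t * h p) p = Kop u g p - t * Kop u h p"
proof -
  have "Kop u (\<lambda>p. g p - t * h p) p =
    (\<Sum>\<^sub>\<infinity>x. of_real (u x) * l2inner (ehat x) g * ehat x p + (- t) * (of_real (u x) * l2inner (ehat x) h * ehat x p))"
    unfolding Kop_def
    by (rule infsum_cong) (simp add: ip_lincomb[OF Lsp_ehat assms] algebra_simps)
  also have "\<dots> = Kop u g p + (\<Sum>\<^sub>\<infinity>x. (- t) * (of_real (u x) * l2inner (ehat x) h * ehat x p))"
    unfolding Kop_def
    by (rule infsum_add[OF summ_term[OF assms(1)]]) (rule summable_on_cmult_right[OF summ_term[OF assms(2)]])
  also have "(\<Sum>\<^sub>\<infinity>x. (- t) * (of_real (u x) * l2inner (ehat x) h * ehat x p)) = (- t) * Kop u h p"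
    unfolding Kop_def by (rule infsum_cmult_right) (rule summ_term[OF assms(2)])
  finally show ?thesis by simp
qed

lemma Kop_herm: assumes "Lsp f" "Lsp g"
  shows "l2inner f (Kop u g) = cnj (l2inner g (Kop u f))"
proof -
  have "cnj (l2inner g (Kop u f)) = (\<Sum>\<^sub>\<infinity>x. cnj (of_real (u x) * l2inner (ehat x) f * l2inner g (ehat x)))"
    unfolding ip_Kop[OF assms(2,1)] by (rule infsum_cnj[symmetric])
  also have "\<dots> = (\<Sum>\<^sub>\<infinity>x. of_real (u x) * l2inner (ehat x) g * l2inner f (ehat x))"
    by (rule infsum_cong) (simp add: ip_cnj[of "ehat _" f] ip_cnj[of g "ehat _"])
  finally show ?thesis by (simp add: ip_Kop[OF assms])
qed

lemma Kop_form: assumes "Lsp g"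
  shows "l2inner g (Kop u g) = of_real (\<Sum>\<^sub>\<infinity>x. u x * (cmod (l2inner (ehat x) g))\<^sup>2)"
    and "0 \<le> Re (l2inner g (Kop u g))"
    and "Re (l2inner g (Kop u g)) \<le> Su * (nrm g)\<^sup>2"
proof -
  define w where "w x = u x * (cmod (l2inner (ehat x) g))\<^sup>2" for x
  have wb: "w x \<le> u x * (nrm g)\<^sup>2" for x
    unfolding w_def using ip_ehat_bound[OF assms, of x] u_nonneg[of x]
    by (intro mult_left_mono power_mono) auto
  have w0: "0 \<le> w x" for x unfolding w_def by (simp add: u_nonneg)
  have ws: "w summable_on UNIV"
    by (rule summable_on_comparison_test[OF summable_on_cmult_left[OF u_summ] wb w0])
  have "l2inner g (Kop u g) = (\<Sum>\<^sub>\<infinity>x. of_real (w x))"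
  proof -
    have "l2inner g (Kop u g) = (\<Sum>\<^sub>\<infinity>x. of_real (u x) * l2inner (ehat x) g * l2inner g (ehat x))"
      by (rule ip_Kop[OF assms assms])
    also have "\<dots> = (\<Sum>\<^sub>\<infinity>x. of_real (w x))"
    proof (rule infsum_cong)
      fix x
      have "l2inner (ehat x) g * l2inner g (ehat x) = of_real ((cmod (l2inner (ehat x) g))\<^sup>2)"
        unfolding ip_cnj[of g "ehat x"] by (rule complex_norm_square[symmetric])
      then show "of_real (u x) * l2inner (ehat x) g * l2inner g (ehat x) = of_real (w x)"
        unfolding w_def by (simp add: mult.assoc)
    qed
    finally show ?thesis .
  qed
  also have "\<dots> = of_real (infsum w UNIV)"
    by (rule infsumI) (rule has_sum_of_real[OF has_sum_infsum[OF ws]])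
  finally have eq: "l2inner g (Kop u g) = of_real (infsum w UNIV)" .
  then show "l2inner g (Kop u g) = of_real (\<Sum>\<^sub>\<infinity>x. u x * (cmod (l2inner (ehat x) g))\<^sup>2)"
    unfolding w_def[abs_def] .
  show "0 \<le> Re (l2inner g (Kop u g))" unfolding eq by (simp add: infsum_nonneg w0)
  have "infsum w UNIV \<le> (\<Sum>\<^sub>\<infinity>x. u x * (nrm g)\<^sup>2)"
    by (rule infsum_mono[OF ws summable_on_cmult_left[OF u_summ] wb])
  also have "\<dots> = Su * (nrm g)\<^sup>2" unfolding Su_def by (rule infsum_cmult_left) (simp add: u_summ)
  finally show "Re (l2inner g (Kop u g)) \<le> Su * (nrm g)\<^sup>2" unfolding eq by simp
qed

end

lemma ip_mult_self: "l2inner g (\<lambda>p. of_real (m p) * g p) = of_real (kap * integral\<^sup>L NN (\<lambda>p. m p * (cmod (g p))\<^sup>2))"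
proof -
  have e: "(\<lambda>p. cnj (g p) * (of_real (m p) * g p)) = (\<lambda>p. of_real (m p * (cmod (g p))\<^sup>2))"
  proof (rule ext)
    fix p
    have "cnj (g p) * g p = of_real ((cmod (g p))\<^sup>2)" by (metis complex_norm_square mult.commute)
    then show "cnj (g p) * (of_real (m p) * g p) = of_real (m p * (cmod (g p))\<^sup>2)"
      by (metis mult.left_commute of_real_mult)
  qed
  have "integral\<^sup>L NN (\<lambda>p. cnj (g p) * (of_real (m p) * g p)) = of_real (integral\<^sup>L NN (\<lambda>p. m p * (cmod (g p))\<^sup>2))"
    unfolding e by (rule integral_complex_of_real)
  then show ?thesis by (simp add: l2inner_NN)
qed

lemma ip_mult_herm: "l2inner f (\<lambda>p. of_real (m p) * g p) = cnj (l2inner g (\<lambda>p. of_real (m p) * f p))"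
proof -
  have "integral\<^sup>L NN (\<lambda>p. cnj (f p) * (of_real (m p) * g p)) = integral\<^sup>L NN (\<lambda>p. cnj (cnj (g p) * (of_real (m p) * f p)))"
    by (rule Bochner_Integration.integral_cong) (auto simp: mult.commute mult.left_commute)
  also have "\<dots> = cnj (integral\<^sup>L NN (\<lambda>p. cnj (g p) * (of_real (m p) * f p)))" by (rule Bochner_Integration.integral_cnj)
  finally show ?thesis by (simp add: l2inner_NN)
qed

locale bctx = uctx +
  fixes m :: "real \<times> real \<Rightarrow> real" and dl Mx :: real
  assumes m_meas[measurable]: "m \<in> borel_measurable NN"
    and dl_pos: "dl > 0" and m_lb: "\<And>p. dl \<le> m p" and m_ub: "\<And>p. m p \<le> Mx"
begin

definition "Bop g p = of_real (m p) * g p + Kop u g p"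
definition "Qf f g = l2inner f (Bop g)"
definition "cc = Mx + Su + 1"
definition "Top g p = g p - complex_of_real (1 / cc) * Bop g p"
definition "Ff f g = l2inner f (Top g)"
definition "qq = 1 - dl / cc"

lemma Mx_ge: "dl \<le> Mx" using m_lb[of 0] m_ub[of 0] by simp
lemma cc_pos: "cc > 0" unfolding cc_def using Mx_ge dl_pos Su_nonneg by simp
lemma qq_ge: "0 \<le> qq" unfolding qq_def using cc_pos Mx_ge Su_nonneg by (simp add: cc_def field_simps)
lemma qq_lt: "qq < 1" unfolding qq_def using cc_pos dl_pos by simp

lemma Lsp_mterm: assumes "Lsp g" shows "Lsp (\<lambda>p. of_real (m p) * g p)"
proof (rule Lsp_mult[OF assms, of _ Mx])
  show "(\<lambda>p. complex_of_real (m p)) \<in> borel_measurable NN" by measurable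
  show "cmod (complex_of_real (m p)) \<le> Mx" for p using m_lb[of p] m_ub[of p] dl_pos by simp
qed

lemma Lsp_Bop: assumes "Lsp g" shows "Lsp (Bop g)"
  unfolding Bop_def[abs_def] by (rule Lsp_add[OF Lsp_mterm[OF assms] Lsp_Kop[OF assms]])

lemma Bop_lin: assumes "Lsp x" "Lsp y"
  shows "Bop (\<lambda>p. x p - t * y p) = (\<lambda>p. Bop x p - t * Bop y p)"
  by (rule ext) (simp add: Bop_def Kop_lin[OF assms] algebra_simps)

lemma Qf_lin: assumes "Lsp x" "Lsp y" "Lsp z"
  shows "Qf z (\<lambda>p. x p - t * y p) = Qf z x - t * Qf z y"
  unfolding Qf_def Bop_lin[OF assms(1,2)] by (rule ip_lincomb[OF assms(3) Lsp_Bop[OF assms(1)] Lsp_Bop[OF assms(2)]])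

lemma Qf_split: assumes "Lsp f" "Lsp g"
  shows "Qf f g = l2inner f (\<lambda>p. of_real (m p) * g p) + l2inner f (Kop u g)"
  unfolding Qf_def Bop_def[abs_def] by (rule ip_add[OF assms(1) Lsp_mterm[OF assms(2)] Lsp_Kop[OF assms(2)]])

lemma Qf_herm: assumes "Lsp f" "Lsp g" shows "Qf f g = cnj (Qf g f)"
  unfolding Qf_split[OF assms] Qf_split[OF assms(2,1)]
  using ip_mult_herm[of f m g] Kop_herm[OF assms] by simp

lemma Qf_bounds: assumes "Lsp g"
  shows "dl * (nrm g)\<^sup>2 \<le> Re (Qf g g)" and "Re (Qf g g) \<le> (Mx + Su) * (nrm g)\<^sup>2"
proof -
  have gi: "integrable NN (\<lambda>p. (cmod (g p))\<^sup>2)" using assms by (simp add: Lsp_def)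
  have [measurable]: "g \<in> borel_measurable NN" using assms by (simp add: Lsp_def)
  have mi: "integrable NN (\<lambda>p. m p * (cmod (g p))\<^sup>2)"
  proof (rule Bochner_Integration.integrable_bound[of _ "\<lambda>p. Mx * (cmod (g p))\<^sup>2"])
    show "integrable NN (\<lambda>p. Mx * (cmod (g p))\<^sup>2)" using gi by simp
    show "(\<lambda>p. m p * (cmod (g p))\<^sup>2) \<in> borel_measurable NN" by measurable
    show "AE p in NN. norm (m p * (cmod (g p))\<^sup>2) \<le> norm (Mx * (cmod (g p))\<^sup>2)"
    proof (rule AE_I2)
      fix p
      have "\<bar>m p\<bar> \<le> \<bar>Mx\<bar>" using m_lb[of p] m_ub[of p] dl_pos by linarith
      then show "norm (m p * (cmod (g p))\<^sup>2) \<le> norm (Mx * (cmod (g p))\<^sup>2)"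
        by (simp add: abs_mult mult_right_mono)
    qed
  qed
  have n2: "(nrm g)\<^sup>2 = kap * integral\<^sup>L NN (\<lambda>p. (cmod (g p))\<^sup>2)"
    by (simp add: nrm_sq ip_self)
  have R: "Re (Qf g g) = kap * integral\<^sup>L NN (\<lambda>p. m p * (cmod (g p))\<^sup>2) + Re (l2inner g (Kop u g))"
    unfolding Qf_split[OF assms assms] ip_mult_self by simp
  have "dl * integral\<^sup>L NN (\<lambda>p. (cmod (g p))\<^sup>2) \<le> integral\<^sup>L NN (\<lambda>p. m p * (cmod (g p))\<^sup>2)"
    using integral_mono[OF integrable_mult_right[OF gi, of dl] mi] m_lb
    by (simp add: mult_right_mono)
  then have "kap * (dl * integral\<^sup>L NN (\<lambda>p. (cmod (g p))\<^sup>2)) \<le> kap * integral\<^sup>L NN (\<lambda>p. m p * (cmod (g p))\<^sup>2)"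
    using kap_pos by (intro mult_left_mono) auto
  then show "dl * (nrm g)\<^sup>2 \<le> Re (Qf g g)"
    unfolding R n2 using Kop_form(2)[OF assms] by (simp add: algebra_simps)
  have "integral\<^sup>L NN (\<lambda>p. m p * (cmod (g p))\<^sup>2) \<le> Mx * integral\<^sup>L NN (\<lambda>p. (cmod (g p))\<^sup>2)"
    using integral_mono[OF mi integrable_mult_right[OF gi, of Mx]] m_ub
    by (simp add: mult_right_mono)
  then have "kap * integral\<^sup>L NN (\<lambda>p. m p * (cmod (g p))\<^sup>2) \<le> kap * (Mx * integral\<^sup>L NN (\<lambda>p. (cmod (g p))\<^sup>2))"
    using kap_pos by (intro mult_left_mono) auto
  then show "Re (Qf g g) \<le> (Mx + Su) * (nrm g)\<^sup>2"
    unfolding R n2 using Kop_form(3)[OF assms] by (simp add: algebra_simps n2)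
qed

lemma Lsp_Top: assumes "Lsp g" shows "Lsp (Top g)"
  unfolding Top_def[abs_def] by (rule Lsp_lincomb[OF assms Lsp_Bop[OF assms]])

lemma Top_lin: assumes "Lsp x" "Lsp y"
  shows "Top (\<lambda>p. x p - t * y p) = (\<lambda>p. Top x p - t * Top y p)"
  by (rule ext) (simp add: Top_def Bop_lin[OF assms] algebra_simps)

lemma Ff_eq: assumes "Lsp f" "Lsp g" shows "Ff f g = l2inner f g - complex_of_real (1 / cc) * Qf f g"
  unfolding Ff_def Top_def[abs_def] Qf_def by (rule ip_lincomb[OF assms Lsp_Bop[OF assms(2)]])

lemma Ff_lin: assumes "Lsp x" "Lsp y" "Lsp z"
  shows "Ff z (\<lambda>p. x p - t * y p) = Ff z x - t * Ff z y"
  unfolding Ff_def Top_lin[OF assms(1,2)] by (rule ip_lincomb[OF assms(3) Lsp_Top[OF assms(1)] Lsp_Top[OF assms(2)]])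

lemma Ff_herm: assumes "Lsp f" "Lsp g" shows "Ff g f = cnj (Ff f g)"
  unfolding Ff_eq[OF assms] Ff_eq[OF assms(2,1)] using Qf_herm[OF assms(2,1)] ip_cnj[of g f] by simp

lemma Re_Ff: assumes "Lsp g" shows "Re (Ff g g) = (nrm g)\<^sup>2 - Re (Qf g g) / cc"
  unfolding Ff_eq[OF assms assms] by (simp add: nrm_sq)

lemma Ff_pos: assumes "Lsp g" shows "0 \<le> Re (Ff g g)"
proof -
  have "Re (Qf g g) / cc \<le> (Mx + Su) * (nrm g)\<^sup>2 / cc"
    using Qf_bounds(2)[OF assms] cc_pos by (simp add: divide_right_mono)
  also have "\<dots> \<le> (nrm g)\<^sup>2" using cc_pos by (simp add: cc_def field_simps)
  finally show ?thesis unfolding Re_Ff[OF assms] by simp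
qed

lemma Ff_upper: assumes "Lsp g" shows "Re (Ff g g) \<le> qq * (nrm g)\<^sup>2"
proof -
  have "dl * (nrm g)\<^sup>2 / cc \<le> Re (Qf g g) / cc"
    using Qf_bounds(1)[OF assms] cc_pos by (simp add: divide_right_mono)
  then show ?thesis unfolding Re_Ff[OF assms] qq_def by (simp add: algebra_simps)
qed

lemma Top_selfadj: assumes "Lsp a" "Lsp b" shows "l2inner (Top a) b = Ff a b"
proof -
  have "l2inner (Top a) b = cnj (l2inner b (Top a))" by (rule ip_cnj)
  also have "\<dots> = cnj (Ff b a)" by (simp add: Ff_def)
  also have "\<dots> = Ff a b" using Ff_herm[OF assms] by simp
  finally show ?thesis .
qed

lemma Top_contr: assumes "Lsp g" shows "nrm (Top g) \<le> qq * nrm g"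
proof -
  define w where "w = Top g"
  have w: "Lsp w" unfolding w_def by (rule Lsp_Top[OF assms])
  have "l2inner w w = Ff g w" unfolding w_def by (rule Top_selfadj[OF assms Lsp_Top[OF assms]])
  then have n2: "(nrm w)\<^sup>2 = Re (Ff g w)" by (simp add: nrm_sq)
  have cs: "(cmod (Ff g w))\<^sup>2 \<le> Re (Ff g g) * Re (Ff w w)"
    by (rule cs_form[OF Ff_lin Ff_herm Ff_pos assms w])
  have "Re (Ff g g) * Re (Ff w w) \<le> (qq * (nrm g)\<^sup>2) * (qq * (nrm w)\<^sup>2)"
    by (intro mult_mono Ff_upper assms w Ff_pos) (use qq_ge in auto)
  moreover have "((nrm w)\<^sup>2)\<^sup>2 \<le> (cmod (Ff g w))\<^sup>2"
  proof -
    have "0 \<le> Re (Ff g w)" using n2[symmetric] by simp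
    then show ?thesis unfolding n2 by (intro power_mono complex_Re_le_cmod)
  qed
  moreover have "(qq * (nrm g)\<^sup>2) * (qq * (nrm w)\<^sup>2) = (qq * nrm g)\<^sup>2 * (nrm w)\<^sup>2"
    by algebra
  ultimately have "((nrm w)\<^sup>2)\<^sup>2 \<le> (qq * nrm g)\<^sup>2 * (nrm w)\<^sup>2"
    using cs by linarith
  then have "(nrm w)\<^sup>2 \<le> (qq * nrm g)\<^sup>2"
  proof (cases "nrm w = 0")
    case True then show ?thesis by simp
  next
    case False
    then have "(nrm w)\<^sup>2 > 0" using nrm_nonneg[of w] by simp
    have "(nrm w)\<^sup>2 * (nrm w)\<^sup>2 \<le> (qq * nrm g)\<^sup>2 * (nrm w)\<^sup>2"
      using \<open>((nrm w)\<^sup>2)\<^sup>2 \<le> (qq * nrm g)\<^sup>2 * (nrm w)\<^sup>2\<close>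
      by (simp only: power2_eq_square[of "(nrm w)\<^sup>2"])
    then show ?thesis using \<open>(nrm w)\<^sup>2 > 0\<close> by (rule mult_right_le_imp_le)
  qed
  from power2_le_imp_le[OF this mult_nonneg_nonneg[OF qq_ge nrm_nonneg]]
  show ?thesis unfolding w_def .
qed

end

lemma AE_summable_norm:
  fixes f :: "nat \<Rightarrow> 'a \<Rightarrow> complex"
  assumes int: "\<And>i. integrable M (f i)" and s: "summable (\<lambda>i. integral\<^sup>L M (\<lambda>x. norm (f i x)))"
  shows "AE x in M. summable (\<lambda>i. norm (f i x))"
proof -
  have [measurable]: "f i \<in> borel_measurable M" for i using int[of i] by simp
  have "(\<integral>\<^sup>+ x. (\<Sum>i. ennreal (norm (f i x))) \<partial>M) = (\<Sum>i. \<integral>\<^sup>+ x. ennreal (norm (f i x)) \<partial>M)"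
    by (rule nn_integral_suminf) measurable
  also have "\<dots> = (\<Sum>i. ennreal (integral\<^sup>L M (\<lambda>x. norm (f i x))))"
    by (intro arg_cong[where f=suminf] ext nn_integral_eq_integral integrable_norm int) auto
  also have "\<dots> \<noteq> \<infinity>"
    using ennreal_suminf_neq_top[OF s integral_nonneg_AE[OF AE_I2[OF norm_ge_zero]]] by simp
  finally have "AE x in M. (\<Sum>i. ennreal (norm (f i x))) \<noteq> \<infinity>"
    by (intro nn_integral_PInf_AE) auto
  then show ?thesis
    by eventually_elim (rule summable_suminf_not_top, auto)
qed

lemma suminf_infsum_nat:
  fixes f :: "nat \<Rightarrow> complex"
  assumes "summable (\<lambda>n. norm (f n))"
  shows "(\<Sum>n. f n) = (\<Sum>\<^sub>\<infinity>n. f n)" and "f summable_on UNIV"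
proof -
  have "(f has_sum (\<Sum>n. f n)) UNIV"
    by (rule norm_summable_imp_has_sum[OF assms]) (simp add: summable_sums summable_norm_cancel[OF assms])
  then show "(\<Sum>n. f n) = (\<Sum>\<^sub>\<infinity>n. f n)" "f summable_on UNIV"
    by (auto simp: infsumI summable_on_def)
qed

lemma swap_sums:
  fixes F :: "int \<times> int \<Rightarrow> nat \<Rightarrow> complex" and u :: "int \<times> int \<Rightarrow> real" and b :: "nat \<Rightarrow> real"
  assumes u: "u summable_on UNIV" "\<And>x. 0 \<le> u x" and b: "summable b" "\<And>n. 0 \<le> b n"
    and F: "\<And>x n. cmod (F x n) \<le> u x * b n"
  shows "(\<Sum>\<^sub>\<infinity>x. \<Sum>n. F x n) = (\<Sum>n. \<Sum>\<^sub>\<infinity>x. F x n)"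
    and "summable (\<lambda>n. norm (\<Sum>\<^sub>\<infinity>x. F x n))"
proof -
  have bs: "summable (\<lambda>n. norm (u x * b n))" for x
    using u(2) b by (simp add: abs_mult)
  have Fs: "summable (\<lambda>n. norm (F x n))" for x
    by (rule summable_comparison_test'[OF bs[of x]]) (use F u(2) b(2) in \<open>auto simp: abs_mult\<close>)
  have nb: "norm (\<Sum>\<^sub>\<infinity>x. F x n) \<le> infsum u UNIV * b n" for n
  proof -
    have s1: "(\<lambda>x. u x * b n) summable_on UNIV" by (rule summable_on_cmult_left[OF u(1)])
    have s2: "(\<lambda>x. F x n) summable_on UNIV"
      by (rule abs_summable_summable[OF Infinite_Sum.abs_summable_on_comparison_test'[OF s1 F]])
    have "norm (\<Sum>\<^sub>\<infinity>x. F x n) \<le> (\<Sum>\<^sub>\<infinity>x. u x * b n)"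
      by (rule norm_infsum_le[OF has_sum_infsum[OF s2] has_sum_infsum[OF s1] F])
    also have "\<dots> = infsum u UNIV * b n" by (rule infsum_cmult_left) (simp add: u(1))
    finally show ?thesis .
  qed
  have sn: "summable (\<lambda>n. norm (\<Sum>\<^sub>\<infinity>x. F x n))"
    by (rule summable_comparison_test'[OF summable_mult[OF b(1), of "infsum u UNIV"]]) (use nb in auto)
  have hs: "((\<lambda>n. u x * b n) has_sum u x * suminf b) UNIV" for x
  proof -
    have "((\<lambda>n. u x * b n) has_sum (\<Sum>n. u x * b n)) UNIV"
      by (rule norm_summable_imp_has_sum[OF bs]) (rule summable_sums[OF summable_mult[OF b(1)]])
    then show ?thesis by (simp add: suminf_mult[OF b(1)])
  qed
  have prod: "(\<lambda>(x, n). u x * b n) summable_on (UNIV \<times> UNIV)"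
    by (rule summable_on_SigmaI[where g="\<lambda>x. u x * suminf b"])
       (use hs summable_on_cmult_left[OF u(1)] u(2) b(2) in auto)
  have Fprod: "(\<lambda>(x, n). F x n) summable_on (UNIV \<times> UNIV)"
  proof (rule abs_summable_summable, rule Infinite_Sum.abs_summable_on_comparison_test'[OF prod])
    fix z :: "(int \<times> int) \<times> nat"
    show "norm (case z of (x, n) \<Rightarrow> F x n) \<le> (case z of (x, n) \<Rightarrow> u x * b n)"
      by (cases z) (simp only: prod.case F)
  qed
  have "(\<Sum>\<^sub>\<infinity>x. \<Sum>n. F x n) = (\<Sum>\<^sub>\<infinity>x. \<Sum>\<^sub>\<infinity>n. F x n)"
    by (rule infsum_cong) (rule suminf_infsum_nat(1)[OF Fs])
  also have "\<dots> = (\<Sum>\<^sub>\<infinity>n. \<Sum>\<^sub>\<infinity>x. F x n)"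
    by (rule infsum_swap_banach[OF Fprod])
  also have "\<dots> = (\<Sum>n. \<Sum>\<^sub>\<infinity>x. F x n)"
    by (rule suminf_infsum_nat(1)[OF sn, symmetric])
  finally show "(\<Sum>\<^sub>\<infinity>x. \<Sum>n. F x n) = (\<Sum>n. \<Sum>\<^sub>\<infinity>x. F x n)" .
  show "summable (\<lambda>n. norm (\<Sum>\<^sub>\<infinity>x. F x n))" by (rule sn)
qed

definition L1 :: "(real \<times> real \<Rightarrow> complex) \<Rightarrow> real" where
  "L1 g = kap * integral\<^sup>L NN (\<lambda>p. cmod (g p))"

lemma L1_nonneg: "0 \<le> L1 g"
  unfolding L1_def using kap_pos by (simp add: integral_nonneg_AE)

lemma ip_ehat_L1: "cmod (l2inner (ehat x) g) \<le> L1 g"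
proof -
  have "cmod (l2inner (ehat x) g) = kap * cmod (integral\<^sup>L NN (\<lambda>p. cnj (ehat x p) * g p))"
    using kap_pos by (simp add: l2inner_NN norm_mult)
  also have "\<dots> \<le> kap * integral\<^sup>L NN (\<lambda>p. cmod (cnj (ehat x p) * g p))"
    using kap_pos by (intro mult_left_mono integral_norm_bound) auto
  also have "\<dots> = L1 g" by (simp add: L1_def norm_mult)
  finally show ?thesis .
qed

lemma L1_le_nrm: assumes "Lsp g" shows "L1 g \<le> nrm g"
proof -
  have e0: "l2inner (ehat (0,0)) (\<lambda>p. of_real (cmod (g p))) = of_real (L1 g)"
    by (simp add: l2inner_NN L1_def)
  have "nrm (\<lambda>p. complex_of_real (cmod (g p))) = nrm g"
    by (simp add: nrm_def ip_self)
  then have "cmod (l2inner (ehat (0,0)) (\<lambda>p. of_real (cmod (g p)))) \<le> nrm g"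
    using ip_le_nrm[OF Lsp_ehat Lsp_norm[OF assms], of "(0,0)"] by (simp add: nrm_ehat)
  then show ?thesis unfolding e0 using L1_nonneg[of g] by simp
qed

context uctx begin

lemma infsum_norm_coef_gen: assumes "\<And>x. cmod (l2inner (ehat x) g) \<le> C"
  shows "(\<Sum>\<^sub>\<infinity>x. cmod (of_real (u x) * l2inner (ehat x) g)) \<le> Su * C"
proof -
  have "(\<Sum>\<^sub>\<infinity>x. cmod (of_real (u x) * l2inner (ehat x) g)) \<le> (\<Sum>\<^sub>\<infinity>x. u x * C)"
  proof (rule infsum_mono[OF abs_summable_bounded[OF asum_u assms]])
    show "(\<lambda>x. u x * C) summable_on UNIV" by (rule summable_on_cmult_left[OF u_summ])
    show "cmod (of_real (u x) * l2inner (ehat x) g) \<le> u x * C" for x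
      using assms[of x] u_nonneg[of x]
      by (simp add: norm_mult abs_of_nonneg mult_left_mono)
  qed
  also have "\<dots> = Su * C" unfolding Su_def by (rule infsum_cmult_left) (simp add: u_summ)
  finally show ?thesis .
qed

lemma asum_coef_gen: "asum (\<lambda>x. of_real (u x) * l2inner (ehat x) g)"
proof -
  have bnd: "\<And>x. cmod (l2inner (ehat x) g) \<le> L1 g" by (rule ip_ehat_L1)
  show ?thesis by (rule abs_summable_bounded[OF asum_u bnd])
qed

lemma Kop_meas_gen: "Kop u g \<in> borel_measurable NN"
  unfolding Kop_def[abs_def]
  by (rule sum_meas[OF asum_coef_gen ehat_meas]) simp

lemma Kop_bound_gen: "cmod (Kop u g p) \<le> Su * L1 g"
proof -
  have bnd: "\<And>x. cmod (l2inner (ehat x) g) \<le> L1 g" by (rule ip_ehat_L1)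
  have "cmod (Kop u g p) \<le> (\<Sum>\<^sub>\<infinity>x. cmod (of_real (u x) * l2inner (ehat x) g))"
    unfolding Kop_def by (rule sum_bound[OF asum_coef_gen]) simp
  also have "\<dots> \<le> Su * L1 g" by (rule infsum_norm_coef_gen[OF bnd])
  finally show ?thesis .
qed

end

context bctx begin

definition hn :: "(real \<times> real \<Rightarrow> complex) \<Rightarrow> nat \<Rightarrow> real \<times> real \<Rightarrow> complex" where
  "hn h n = (Top ^^ n) h"

lemma hn_0[simp]: "hn h 0 = h" by (simp add: hn_def)
lemma hn_Suc: "hn h (Suc n) = Top (hn h n)" by (simp add: hn_def)

lemma Lsp_hn: assumes "Lsp h" shows "Lsp (hn h n)"
  by (induct n) (simp_all add: hn_Suc Lsp_Top assms)

definition "bb h n = qq ^ n * nrm h"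

lemma bb_nonneg: "0 \<le> bb h n" unfolding bb_def using qq_ge nrm_nonneg by simp

lemma bb_summ: "summable (bb h)"
proof -
  have "summable (\<lambda>n. qq ^ n)" using qq_ge qq_lt by (intro summable_geometric) simp
  then show ?thesis unfolding bb_def[abs_def] by (rule summable_mult2)
qed

lemma nrm_hn: assumes "Lsp h" shows "nrm (hn h n) \<le> bb h n"
proof (induct n)
  case 0 then show ?case by (simp add: bb_def)
next
  case (Suc n)
  have "nrm (hn h (Suc n)) \<le> qq * nrm (hn h n)"
    unfolding hn_Suc by (rule Top_contr[OF Lsp_hn[OF assms]])
  also have "\<dots> \<le> qq * bb h n" using Suc qq_ge by (rule mult_left_mono)
  also have "\<dots> = bb h (Suc n)" by (simp add: bb_def)
  finally show ?case .
qed

lemma L1_hn: assumes "Lsp h" shows "L1 (hn h n) \<le> bb h n"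
  using L1_le_nrm[OF Lsp_hn[OF assms]] nrm_hn[OF assms] by (rule order_trans)

lemma int_norm_hn: assumes "Lsp h"
  shows "integral\<^sup>L NN (\<lambda>p. cmod (hn h n p)) \<le> bb h n / kap"
  using L1_hn[OF assms, of n] kap_pos by (simp add: L1_def field_simps)

lemma summ_int_hn: assumes "Lsp h"
  shows "summable (\<lambda>n. integral\<^sup>L NN (\<lambda>p. cmod (hn h n p)))"
proof (rule summable_comparison_test'[OF summable_divide[OF bb_summ[of h], of kap]])
  show "norm (integral\<^sup>L NN (\<lambda>p. cmod (hn h n p))) \<le> bb h n / kap" for n
    using int_norm_hn[OF assms, of n] by (simp add: integral_nonneg_AE)
qed

lemma AE_summ_hn: assumes "Lsp h" shows "AE p in NN. summable (\<lambda>n. cmod (hn h n p))"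
  by (rule AE_summable_norm[OF Lsp_int[OF Lsp_hn[OF assms]] summ_int_hn[OF assms]])

definition "gsol h p = complex_of_real (1 / cc) * (\<Sum>n. hn h n p)"

lemma hn_meas[measurable]: assumes "Lsp h" shows "hn h n \<in> borel_measurable NN"
  by (rule Lsp_meas[OF Lsp_hn[OF assms]])

lemma gsol_meas: assumes "Lsp h" shows "gsol h \<in> borel_measurable NN"
proof -
  have [measurable]: "hn h n \<in> borel_measurable NN" for n by (rule hn_meas[OF assms])
  show ?thesis unfolding gsol_def[abs_def] by measurable
qed

lemma ip_gsol: assumes h: "Lsp h"
  shows "l2inner (ehat x) (gsol h) = (\<Sum>n. complex_of_real (1 / cc) * l2inner (ehat x) (hn h n))"
proof -
  define c where "c = complex_of_real (1 / cc)"
  define f where "f n p = cnj (ehat x p) * (c * hn h n p)" for n p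
  have fi: "integrable NN (f n)" for n
    unfolding f_def by (rule Lsp_prod[OF Lsp_ehat Lsp_scale[OF Lsp_hn[OF h]]])
  have nf: "norm (f n p) = (1 / cc) * cmod (hn h n p)" for n p
    unfolding f_def c_def using cc_pos by (simp add: norm_mult norm_divide)
  have s1: "AE p in NN. summable (\<lambda>n. norm (f n p))"
    using AE_summ_hn[OF h] by eventually_elim (simp add: nf summable_mult)
  have s2: "summable (\<lambda>n. integral\<^sup>L NN (\<lambda>p. norm (f n p)))"
    unfolding nf using summable_mult[OF summ_int_hn[OF h], of "1 / cc"] by simp
  have [measurable]: "hn h n \<in> borel_measurable NN" for n by (rule hn_meas[OF h])
  have "integral\<^sup>L NN (\<lambda>p. cnj (ehat x p) * gsol h p) = integral\<^sup>L NN (\<lambda>p. \<Sum>n. f n p)"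
  proof (rule integral_cong_AE)
    show "(\<lambda>p. cnj (ehat x p) * gsol h p) \<in> borel_measurable NN"
      using gsol_meas[OF h] by measurable
    show "(\<lambda>p. \<Sum>n. f n p) \<in> borel_measurable NN" unfolding f_def by measurable
    show "AE p in NN. cnj (ehat x p) * gsol h p = (\<Sum>n. f n p)"
      using AE_summ_hn[OF h]
    proof eventually_elim
      case (elim p)
      then have sm: "summable (\<lambda>n. hn h n p)" by (rule summable_norm_cancel)
      show ?case unfolding f_def gsol_def c_def[symmetric]
        by (rule sums_unique[OF sums_mult[OF sums_mult[OF summable_sums[OF sm], of c], of "cnj (ehat x p)"]])
    qed
  qed
  also have "\<dots> = (\<Sum>n. integral\<^sup>L NN (f n))" by (rule integral_suminf[OF fi s1 s2])
  finally have I: "integral\<^sup>L NN (\<lambda>p. cnj (ehat x p) * gsol h p) = (\<Sum>n. integral\<^sup>L NN (f n))" .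
  have si: "summable (\<lambda>n. integral\<^sup>L NN (f n))" by (rule summable_integral[OF fi s1 s2])
  have "l2inner (ehat x) (gsol h) = kap * (\<Sum>n. integral\<^sup>L NN (f n))"
    by (simp add: l2inner_NN I)
  also have "\<dots> = (\<Sum>n. kap * integral\<^sup>L NN (f n))" by (rule suminf_mult[OF si, symmetric])
  also have "\<dots> = (\<Sum>n. c * l2inner (ehat x) (hn h n))"
  proof (rule suminf_cong)
    fix n
    have "kap * integral\<^sup>L NN (f n) = l2inner (ehat x) (\<lambda>p. c * hn h n p)"
      by (simp add: l2inner_NN f_def[abs_def])
    then show "kap * integral\<^sup>L NN (f n) = c * l2inner (ehat x) (hn h n)" by (simp add: ip_scale)
  qed
  finally show ?thesis unfolding c_def .
qed

lemma Kop_gsol: assumes h: "Lsp h"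
  shows "Kop u (gsol h) p = (\<Sum>n. complex_of_real (1 / cc) * Kop u (hn h n) p)"
    and "summable (\<lambda>n. norm (complex_of_real (1 / cc) * Kop u (hn h n) p))"
proof -
  define c where "c = complex_of_real (1 / cc)"
  define F where "F x n = of_real (u x) * (c * l2inner (ehat x) (hn h n)) * ehat x p" for x n
  define b' where "b' n = (1 / cc) * bb h n" for n
  have b'_s: "summable b'" unfolding b'_def[abs_def] by (rule summable_mult[OF bb_summ])
  have b'_0: "0 \<le> b' n" for n unfolding b'_def using cc_pos bb_nonneg by simp
  have ab: "cmod (c * l2inner (ehat x) (hn h n)) \<le> b' n" for x n
  proof -
    have "cmod (l2inner (ehat x) (hn h n)) \<le> bb h n"
      using ip_ehat_bound[OF Lsp_hn[OF h]] nrm_hn[OF h] by (rule order_trans)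
    then show ?thesis unfolding c_def b'_def using cc_pos by (simp add: norm_mult norm_divide divide_right_mono)
  qed
  have Fb: "cmod (F x n) \<le> u x * b' n" for x n
    unfolding F_def using ab[of x n] u_nonneg[of x] by (simp add: norm_mult abs_of_nonneg mult_left_mono)
  have an: "summable (\<lambda>n. norm (c * l2inner (ehat x) (hn h n)))" for x
    by (rule summable_comparison_test'[OF b'_s]) (use ab in auto)
  have "Kop u (gsol h) p = (\<Sum>\<^sub>\<infinity>x. \<Sum>n. F x n)"
    unfolding Kop_def
  proof (rule infsum_cong)
    fix x
    have sa: "summable (\<lambda>n. c * l2inner (ehat x) (hn h n))" by (rule summable_norm_cancel[OF an])
    have "l2inner (ehat x) (gsol h) = (\<Sum>n. c * l2inner (ehat x) (hn h n))"
      unfolding c_def by (rule ip_gsol[OF h])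
    then show "of_real (u x) * l2inner (ehat x) (gsol h) * ehat x p = (\<Sum>n. F x n)"
      unfolding F_def using sums_unique[OF sums_mult2[OF sums_mult[OF summable_sums[OF sa], of "of_real (u x)"], of "ehat x p"]]
      by simp
  qed
  also have "\<dots> = (\<Sum>n. \<Sum>\<^sub>\<infinity>x. F x n)"
    by (rule swap_sums(1)[OF u_summ u_nonneg b'_s b'_0 Fb])
  also have "\<dots> = (\<Sum>n. c * Kop u (hn h n) p)"
  proof (rule suminf_cong)
    fix n
    have "(\<Sum>\<^sub>\<infinity>x. F x n) = (\<Sum>\<^sub>\<infinity>x. c * (of_real (u x) * l2inner (ehat x) (hn h n) * ehat x p))"
      by (rule infsum_cong) (simp add: F_def algebra_simps)
    also have "\<dots> = c * Kop u (hn h n) p"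
      unfolding Kop_def by (rule infsum_cmult_right) (rule summ_term[OF Lsp_hn[OF h]])
    finally show "(\<Sum>\<^sub>\<infinity>x. F x n) = c * Kop u (hn h n) p" .
  qed
  finally show "Kop u (gsol h) p = (\<Sum>n. complex_of_real (1 / cc) * Kop u (hn h n) p)"
    unfolding c_def .
  have "(\<Sum>\<^sub>\<infinity>x. F x n) = c * Kop u (hn h n) p" for n
  proof -
    have "(\<Sum>\<^sub>\<infinity>x. F x n) = (\<Sum>\<^sub>\<infinity>x. c * (of_real (u x) * l2inner (ehat x) (hn h n) * ehat x p))"
      by (rule infsum_cong) (simp add: F_def algebra_simps)
    also have "\<dots> = c * Kop u (hn h n) p"
      unfolding Kop_def by (rule infsum_cmult_right) (rule summ_term[OF Lsp_hn[OF h]])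
    finally show ?thesis .
  qed
  then show "summable (\<lambda>n. norm (complex_of_real (1 / cc) * Kop u (hn h n) p))"
    using swap_sums(2)[OF u_summ u_nonneg b'_s b'_0 Fb] unfolding c_def by simp
qed

lemma gsol_eq: assumes h: "Lsp h" shows "AE p in NN. Bop (gsol h) p = h p"
  using AE_summ_hn[OF h]
proof eventually_elim
  case (elim p)
  define c where "c = complex_of_real (1 / cc)"
  have sm: "summable (\<lambda>n. hn h n p)" by (rule summable_norm_cancel[OF elim])
  have lim: "(\<lambda>n. hn h n p) \<longlonglongrightarrow> 0" by (rule summable_LIMSEQ_zero[OF sm])
  have tele: "(\<lambda>n. hn h n p - hn h (Suc n) p) sums (h p)"
    using telescope_sums'[OF lim] by simp
  have step: "c * (of_real (m p) * hn h n p) + c * Kop u (hn h n) p = hn h n p - hn h (Suc n) p" for n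
    unfolding hn_Suc Top_def Bop_def c_def by (simp add: algebra_simps)
  have A: "(\<lambda>n. c * (of_real (m p) * hn h n p)) sums (of_real (m p) * gsol h p)"
    unfolding gsol_def c_def[symmetric]
    using sums_mult[OF sums_mult[OF summable_sums[OF sm], of "of_real (m p)"], of c]
    by (simp add: mult.left_commute)
  have B: "(\<lambda>n. c * Kop u (hn h n) p) sums (Kop u (gsol h) p)"
    unfolding Kop_gsol(1)[OF h, of p] c_def
    by (rule summable_sums[OF summable_norm_cancel[OF Kop_gsol(2)[OF h]]])
  have "(\<lambda>n. hn h n p - hn h (Suc n) p) sums (Bop (gsol h) p)"
    using sums_add[OF A B] unfolding step by (simp add: Bop_def)
  then show "Bop (gsol h) p = h p" using tele by (simp add: sums_unique2)
qed

lemma Lsp_gsol: assumes h: "Lsp h" shows "Lsp (gsol h)"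
proof -
  define r where "r p = complex_of_real (1 / m p) * (h p - Kop u (gsol h) p)" for p
  have Kl: "Lsp (Kop u (gsol h))"
    by (rule Lsp_bounded[OF Kop_meas_gen Kop_bound_gen])
  have [measurable]: "(\<lambda>p. complex_of_real (1 / m p)) \<in> borel_measurable NN" by measurable
  have rL: "Lsp r" unfolding r_def[abs_def]
  proof (rule Lsp_mult[OF Lsp_diff[OF h Kl]])
    show "(\<lambda>p. complex_of_real (1 / m p)) \<in> borel_measurable NN" by measurable
    show "cmod (complex_of_real (1 / m p)) \<le> 1 / dl" for p
    proof -
      have mp: "0 < m p" using m_lb[of p] dl_pos by simp
      have "1 / m p \<le> 1 / dl" using m_lb[of p] dl_pos by (simp add: frac_le)
      then show ?thesis using mp by (simp only: norm_of_real) simp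
    qed
  qed
  have ae: "AE p in NN. gsol h p = r p"
    using gsol_eq[OF h]
  proof eventually_elim
    case (elim p)
    have "m p > 0" using m_lb[of p] dl_pos by simp
    then show ?case using elim unfolding r_def Bop_def
      by (auto simp: field_simps)
  qed
  have gm[measurable]: "gsol h \<in> borel_measurable NN" by (rule gsol_meas[OF h])
  have rm[measurable]: "r \<in> borel_measurable NN" by (rule Lsp_meas[OF rL])
  have "integrable NN (\<lambda>p. (cmod (gsol h p))\<^sup>2) = integrable NN (\<lambda>p. (cmod (r p))\<^sup>2)"
    by (rule integrable_cong_AE) (use ae in \<open>auto elim: AE_mp\<close>)
  then show ?thesis using rL unfolding Lsp_def by simp
qed

lemma exists_sol: assumes "Lsp h" shows "\<exists>g. Lsp g \<and> (AE p in NN. Bop g p = h p)"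
  using Lsp_gsol[OF assms] gsol_eq[OF assms] by blast

end

context bctx begin

definition "AU U g p = Bop g p + complex_of_real U * l2inner (ehat (0,0)) g * ehat (0,0) p"

lemma Lsp_AU: assumes "Lsp g" shows "Lsp (AU U g)"
proof -
  have "Lsp (\<lambda>p. (complex_of_real U * l2inner (ehat (0,0)) g) * ehat (0,0) p)"
    by (rule Lsp_scale[OF Lsp_ehat])
  then show ?thesis unfolding AU_def[abs_def] using Lsp_add[OF Lsp_Bop[OF assms]] by simp
qed

lemma AU_lin: assumes "Lsp x" "Lsp y"
  shows "AU U (\<lambda>p. x p - t * y p) p = AU U x p - t * AU U y p"
  unfolding AU_def Bop_lin[OF assms] ip_lincomb[OF Lsp_ehat assms] by (simp add: algebra_simps)

lemma AU_form: assumes w: "Lsp w" and U: "0 \<le> U"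
  shows "dl * (nrm w)\<^sup>2 \<le> Re (l2inner w (AU U w))"
proof -
  define c where "c = complex_of_real U * l2inner (ehat (0,0)) w"
  have "l2inner w (AU U w) = Qf w w + l2inner w (\<lambda>p. c * ehat (0,0) p)"
    unfolding AU_def[abs_def] Qf_def c_def[symmetric]
    by (rule ip_add[OF w Lsp_Bop[OF w] Lsp_scale[OF Lsp_ehat]])
  also have "l2inner w (\<lambda>p. c * ehat (0,0) p) = c * l2inner w (ehat (0,0))" by (rule ip_scale)
  also have "c * l2inner w (ehat (0,0)) = of_real (U * (cmod (l2inner (ehat (0,0)) w))\<^sup>2)"
  proof -
    have z: "l2inner (ehat (0,0)) w * cnj (l2inner (ehat (0,0)) w) = of_real ((cmod (l2inner (ehat (0,0)) w))\<^sup>2)"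
      by (rule complex_norm_square[symmetric])
    show ?thesis unfolding c_def ip_cnj[of w "ehat (0,0)"] mult.assoc z by simp
  qed
  finally have "Re (l2inner w (AU U w)) = Re (Qf w w) + U * (cmod (l2inner (ehat (0,0)) w))\<^sup>2" by simp
  moreover have "0 \<le> U * (cmod (l2inner (ehat (0,0)) w))\<^sup>2" using U by simp
  ultimately show ?thesis using Qf_bounds(1)[OF w] by linarith
qed

lemma AU_unique:
  assumes U: "0 \<le> U" and f: "Lsp f" and g1: "Lsp g1" and g2: "Lsp g2"
    and e1: "AE p in NN. AU U g1 p = h p" and e2: "AE p in NN. AU U g2 p = h p"
  shows "l2inner f g1 = l2inner f g2"
proof -
  define w where "w = (\<lambda>p. g1 p - 1 * g2 p)"
  have w: "Lsp w" unfolding w_def by (rule Lsp_lincomb[OF g1 g2])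
  have "AE p in NN. AU U w p = 0"
    using e1 e2 by eventually_elim (simp only: w_def AU_lin[OF g1 g2], simp)
  then have "l2inner w (AU U w) = l2inner w (\<lambda>_. 0)"
    by (rule ip_cong_AE[OF _ w Lsp_AU[OF w] Lsp_const])
  then have "l2inner w (AU U w) = 0" by (simp add: l2inner_NN)
  then have "dl * (nrm w)\<^sup>2 \<le> 0" using AU_form[OF w U] by simp
  then have "(nrm w)\<^sup>2 = 0" using dl_pos by (simp add: mult_le_0_iff)
  then have "Re (l2inner w w) = 0" by (simp add: nrm_sq)
  then have "AE p in NN. w p = 0" by (rule ip_zero_AE[OF w])
  then have "AE p in NN. g1 p = g2 p" by eventually_elim (simp add: w_def)
  then show ?thesis by (rule ip_cong_AE[OF _ f g1 g2])
qed

end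

lemma final_alg:
  fixes s d0 U :: real and R :: complex
  assumes s: "s > 0" and U: "U \<ge> 0" and cs: "(cmod R)\<^sup>2 \<le> s * d0"
  shows "(complex_of_real d0 * complex_of_real s - complex_of_real ((cmod R)\<^sup>2)) / complex_of_real s \<in> \<real> \<and>
    Re ((complex_of_real d0 * complex_of_real s - complex_of_real ((cmod R)\<^sup>2)) / complex_of_real s) \<ge> 0 \<and>
    (let D = (complex_of_real d0 - (complex_of_real U * R / (1 + complex_of_real U * complex_of_real s)) * cnj R)
             - (complex_of_real d0 * complex_of_real s - complex_of_real ((cmod R)\<^sup>2)) / complex_of_real s;
         B = complex_of_real d0 / (1 + complex_of_real U * complex_of_real s)
     in D \<in> \<real> \<and> B \<in> \<real> \<and> 0 \<le> Re D \<and> Re D \<le> Re B)"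
proof -
  define r where "r = (cmod R)\<^sup>2"
  have Rc: "R * cnj R = complex_of_real r" unfolding r_def by (rule complex_norm_square[symmetric])
  have us: "1 + U * s > 0" using U s by (simp add: add_pos_nonneg)
  have e1: "(complex_of_real d0 * complex_of_real s - complex_of_real r) / complex_of_real s = of_real ((d0 * s - r) / s)"
    by simp
  have e2: "(complex_of_real d0 - (complex_of_real U * R / (1 + complex_of_real U * complex_of_real s)) * cnj R)
             - (complex_of_real d0 * complex_of_real s - complex_of_real r) / complex_of_real s
          = of_real (r / (s * (1 + U * s)))"
  proof -
    have "(complex_of_real U * R / (1 + complex_of_real U * complex_of_real s)) * cnj R
        = of_real (U * r / (1 + U * s))"
      by (simp add: Rc[symmetric] mult.commute mult.left_commute)
    then have "(complex_of_real d0 - (complex_of_real U * R / (1 + complex_of_real U * complex_of_real s)) * cnj R)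
             - (complex_of_real d0 * complex_of_real s - complex_of_real r) / complex_of_real s
          = of_real (d0 - U * r / (1 + U * s) - (d0 * s - r) / s)" by simp
    also have "d0 - U * r / (1 + U * s) - (d0 * s - r) / s = r / (s * (1 + U * s))"
      using s us by (simp add: field_simps)
    finally show ?thesis .
  qed
  have e3: "complex_of_real d0 / (1 + complex_of_real U * complex_of_real s) = of_real (d0 / (1 + U * s))"
    by simp
  have i1: "0 \<le> (d0 * s - r) / s" using cs s unfolding r_def by (simp add: mult.commute)
  have i2: "0 \<le> r / (s * (1 + U * s))" using s us unfolding r_def by simp
  have i3: "r / (s * (1 + U * s)) \<le> d0 / (1 + U * s)"
  proof -
    have a: "r / s \<le> d0" using cs s unfolding r_def by (simp add: field_simps mult.commute)
    have b: "r / s / (1 + U * s) \<le> d0 / (1 + U * s)" by (rule divide_right_mono[OF a]) (use us in simp)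
    have c: "r / (s * (1 + U * s)) = r / s / (1 + U * s)" by (rule divide_divide_eq_left[symmetric])
    show ?thesis unfolding c by (rule b)
  qed
  show ?thesis unfolding r_def[symmetric] Let_def unfolding e2 unfolding e1 e3 using i1 i2 i3 by simp
qed

lemma cos_pair_le:
  fixes a b :: real
  assumes "-pi \<le> b" "b < pi"
  shows "cos (a + b) + cos a \<le> 2 * cos (b / 2)"
proof -
  have "cos (a + b) + cos a = 2 * cos ((a + b + a) / 2) * cos ((a + b - a) / 2)" by (rule cos_plus_cos)
  also have "(a + b - a) / 2 = b / 2" by simp
  finally have e: "cos (a + b) + cos a = 2 * cos ((a + b + a) / 2) * cos (b / 2)" .
  have c0: "0 \<le> cos (b / 2)" using assms by (intro cos_ge_zero) auto
  have "cos ((a + b + a) / 2) * cos (b / 2) \<le> cos (b / 2)"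
  proof -
    have "cos ((a + b + a) / 2) * cos (b / 2) \<le> 1 * cos (b / 2)"
      by (rule mult_right_mono[OF cos_le_one c0])
    then show ?thesis by simp
  qed
  then show ?thesis unfolding e by simp
qed

lemma ffk_bounds: assumes eps: "0 \<le> eps" and k: "k \<in> T2"
  shows "zzk eps k \<le> ffk eps k p" and "ffk eps k p \<le> 8 * eps"
proof -
  obtain k1 k2 where kk: "k = (k1, k2)" by (cases k)
  obtain p1 p2 where pp: "p = (p1, p2)" by (cases p)
  have k1: "-pi \<le> k1" "k1 < pi" and k2: "-pi \<le> k2" "k2 < pi" using k by (auto simp: T2_def kk)
  have "cos (p1 + k1) + cos p1 \<le> 2 * cos (k1 / 2)" by (rule cos_pair_le[OF k1])
  moreover have "cos (p2 + k2) + cos p2 \<le> 2 * cos (k2 / 2)" by (rule cos_pair_le[OF k2])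
  ultimately have "4 - 2 * (cos (k1 / 2) + cos (k2 / 2)) \<le> 4 - cos2 (p + k) - cos2 p"
    by (simp add: cos2_def kk pp)
  then have "eps * (4 - 2 * (cos (k1 / 2) + cos (k2 / 2))) \<le> eps * (4 - cos2 (p + k) - cos2 p)"
    by (rule mult_left_mono[OF _ eps])
  then show "zzk eps k \<le> ffk eps k p"
    by (simp add: zzk_def ffk_def cos2_def half_def kk algebra_simps)
  have "4 - cos2 (p + k) - cos2 p \<le> 8"
    unfolding cos2_def using cos_ge_minus_one[of "fst (p + k)"] cos_ge_minus_one[of "snd (p + k)"]
      cos_ge_minus_one[of "fst p"] cos_ge_minus_one[of "snd p"] by linarith
  then have "eps * (4 - cos2 (p + k) - cos2 p) \<le> eps * 8" by (rule mult_left_mono[OF _ eps])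
  then show "ffk eps k p \<le> 8 * eps" by (simp add: ffk_def mult.commute)
qed

lemma ffk_meas: "(\<lambda>p. ffk eps k p - lam) \<in> borel_measurable NN"
proof -
  have "continuous_on UNIV (\<lambda>p. ffk eps k p - lam)"
    unfolding ffk_def[abs_def] cos2_def by (intro continuous_intros)
  then have "(\<lambda>p. ffk eps k p - lam) \<in> borel_measurable lborel"
    using borel_measurable_continuous_onI by simp
  then show ?thesis by (rule meas_NN)
qed

lemma sone_ehat: "sone = ehat (0,0)" by (rule ext) (simp add: sone_def)

lemma sqint_Lsp: assumes "sqint g" shows "Lsp g"
  using assms unfolding sqint_def Lsp_def by (auto intro: meas_NN simp: integrable_NN)

lemma fhat_alt: "fhat f q = (\<Sum>\<^sub>\<infinity>x. of_real (f x) * ehat x q)"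
  unfolding fhat_def ehat_def by (rule infsum_cong) (simp add: mult.commute)

lemma Lsp_fhat_shift:
  assumes f: "(\<lambda>x. \<bar>f x\<bar>) summable_on UNIV"
  shows "Lsp (\<lambda>p. fhat f (c + p))"
proof -
  have a: "asum (\<lambda>x. complex_of_real (f x))" using f by simp
  have cont: "continuous_on UNIV (\<lambda>p. ehat x (c + p))" for x
    unfolding ehat_def dotp_def by (intro continuous_intros)
  have m: "(\<lambda>p. ehat x (c + p)) \<in> borel_measurable NN" for x
    using borel_measurable_continuous_onI[OF cont[of x]] by (intro meas_NN) simp
  have "(\<lambda>p. \<Sum>\<^sub>\<infinity>x. of_real (f x) * ehat x (c + p)) \<in> borel_measurable NN"
    by (rule sum_meas[OF a m]) simp
  moreover have "cmod (\<Sum>\<^sub>\<infinity>x. of_real (f x) * ehat x (c + p)) \<le> (\<Sum>\<^sub>\<infinity>x. cmod (complex_of_real (f x)))" for p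
    by (rule sum_bound[OF a]) simp
  ultimately show ?thesis unfolding fhat_alt by (intro Lsp_bounded) auto
qed

lemma Lsp_ddk:
  assumes "(\<lambda>x. \<bar>p1 x\<bar>) summable_on UNIV" "(\<lambda>x. \<bar>p2 x\<bar>) summable_on UNIV"
  shows "Lsp (ddk p1 p2 k)"
  unfolding ddk_def[abs_def] by (rule Lsp_add[OF Lsp_fhat_shift[OF assms(1)] Lsp_fhat_shift[OF assms(2)]])

lemma summable_from_exp:
  assumes "\<alpha> > 0" "(\<lambda>z. exp (\<alpha> * znorm z) * \<bar>f z\<bar>) summable_on UNIV"
  shows "(\<lambda>x. \<bar>f x\<bar>) summable_on UNIV"
proof (rule summable_on_comparison_test[OF assms(2)])
  show "\<bar>f x\<bar> \<le> exp (\<alpha> * znorm x) * \<bar>f x\<bar>" for x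
  proof -
    have "0 \<le> znorm x" by (simp add: znorm_def)
    then have "1 \<le> exp (\<alpha> * znorm x)" using assms(1) by simp
    then show ?thesis by (simp add: mult_le_cancel_right1)
  qed
  show "0 \<le> \<bar>f x\<bar>" for x by simp
qed

lemma ip_first_cong: assumes "AE p in NN. a p = b p" "Lsp a" "Lsp b" "Lsp c"
  shows "l2inner a c = l2inner b c"
proof -
  have "l2inner c a = l2inner c b" by (rule ip_cong_AE[OF assms(1) assms(4,2,3)])
  then show ?thesis by (metis ip_cnj)
qed

context bctx begin

lemma AU0: "AU 0 g = Bop g" by (rule ext) (simp add: AU_def)

lemma rform_eval:
  assumes mdef: "m = (\<lambda>p. ffk eps k p - lam)" and U: "0 \<le> U" and f: "Lsp f" and h: "Lsp h" and g: "Lsp g"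
    and eq: "AE p in NN. AU U g p = h p"
  shows "rform eps u U k lam f h = l2inner f g"
proof -
  have AopAU: "Aop eps u U k g p - of_real lam * g p = AU U g p" for g p
    unfolding AU_def Bop_def unfolding Aop_def Kop_def mdef by (simp add: algebra_simps)
  define g' where "g' p = indicator T2 p *\<^sub>R g p" for p
  have gg: "p \<in> T2 \<Longrightarrow> g' p = g p" for p by (simp add: g'_def)
  have ipg: "l2inner f' g' = l2inner f' g" for f'
    unfolding l2inner_NN
    by (intro arg_cong[where f="\<lambda>x. _ * x"] Bochner_Integration.integral_cong) (auto simp: gg)
  have AUg: "AU U g' p = AU U g p" if "p \<in> T2" for p
    unfolding AU_def Bop_def Kop_def ipg gg[OF that] ..
  have gm: "g \<in> borel_measurable NN" by (rule Lsp_meas[OF g])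
  have sq: "sqint g'"
    unfolding sqint_def
  proof
    show "g' \<in> borel_measurable lborel"
      using gm unfolding NN_def g'_def[abs_def]
      by (subst (asm) borel_measurable_restrict_space_iff) (use T2_sets in auto)
    have "integrable NN (\<lambda>p. (cmod (g' p))\<^sup>2) = integrable NN (\<lambda>p. (cmod (g p))\<^sup>2)"
      by (rule Bochner_Integration.integrable_cong[OF refl]) (auto simp: gg)
    then show "set_integrable lborel T2 (\<lambda>p. (cmod (g' p))\<^sup>2)"
      using g by (simp add: Lsp_def integrable_NN[symmetric])
  qed
  define P where "P c \<longleftrightarrow> (\<exists>g. sqint g \<and>
      (AE p in lborel. p \<in> T2 \<longrightarrow> Aop eps u U k g p - of_real lam * g p = h p) \<and> c = l2inner f g)" for c
  have P1: "P (l2inner f g)"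
    unfolding P_def
  proof (intro exI conjI)
    show "sqint g'" by (rule sq)
    show "l2inner f g = l2inner f g'" by (simp add: ipg)
    have "AE p in NN. Aop eps u U k g' p - of_real lam * g' p = h p"
      using eq by (rule AE_mp) (intro AE_I2, simp add: AopAU AUg)
    then show "AE p in lborel. p \<in> T2 \<longrightarrow> Aop eps u U k g' p - of_real lam * g' p = h p"
      by (simp add: AE_NN)
  qed
  have P2: "c = l2inner f g" if "P c" for c
  proof -
    obtain g2 where g2: "sqint g2" "AE p in lborel. p \<in> T2 \<longrightarrow> Aop eps u U k g2 p - of_real lam * g2 p = h p"
      and c: "c = l2inner f g2" using \<open>P c\<close> unfolding P_def by blast
    have L2: "Lsp g2" by (rule sqint_Lsp[OF g2(1)])
    have "AE p in NN. AU U g2 p = h p"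
      using g2(2) unfolding AE_NN AopAU .
    from AU_unique[OF U f g L2 eq this] show ?thesis using c by simp
  qed
  have "rform eps u U k lam f h = (THE c. P c)" unfolding rform_def P_def ..
  also have "\<dots> = l2inner f g" by (rule the_equality[of P, OF P1 P2])
  finally show ?thesis .
qed

lemma ip_first_sol: assumes a: "Lsp a" and gs: "Lsp gs" and g: "Lsp g" and e: "AE p in NN. Bop gs p = a p"
  shows "l2inner a g = Qf gs g"
proof -
  have "AE p in NN. a p = Bop gs p" using e by auto
  then have "l2inner a g = l2inner (Bop gs) g" by (rule ip_first_cong[OF _ a Lsp_Bop[OF gs] g])
  also have "\<dots> = cnj (Qf g gs)" unfolding Qf_def by (rule ip_cnj)
  also have "\<dots> = Qf gs g" using Qf_herm[OF gs g] by simp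
  finally show ?thesis .
qed

lemma Qf_real: assumes "Lsp g" shows "Qf g g = of_real (Re (Qf g g))"
proof -
  have "Qf g g = cnj (Qf g g)" by (rule Qf_herm[OF assms assms])
  then have "Im (Qf g g) = 0" by (metis Im_complex_of_real Reals_cnj_iff complex_is_Real_iff)
  then show ?thesis by (simp add: complex_eq_iff)
qed

lemma Qf_pos_sol: assumes gs: "Lsp gs" and e: "AE p in NN. Bop gs p = ehat (0,0) p"
  shows "0 < Re (Qf gs gs)"
proof (rule ccontr)
  assume "\<not> 0 < Re (Qf gs gs)"
  then have "dl * (nrm gs)\<^sup>2 \<le> 0" using Qf_bounds(1)[OF gs] by simp
  then have "(nrm gs)\<^sup>2 = 0" using dl_pos by (simp add: mult_le_0_iff)
  then have "AE p in NN. gs p = 0" by (intro ip_zero_AE[OF gs]) (simp add: nrm_sq)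
  then have "AE p in NN. gs p = (\<lambda>_. 0) p" by simp
  then have z: "l2inner gs (Bop (ehat (0,0))) = l2inner (\<lambda>_. 0) (Bop (ehat (0,0)))"
    by (rule ip_first_cong[OF _ gs Lsp_const Lsp_Bop[OF Lsp_ehat]])
  have "1 = l2inner (ehat (0,0)) (ehat (0,0))" by (simp add: ip_ehat_self)
  also have "\<dots> = l2inner (ehat (0,0)) (Bop gs)"
    using e by (intro ip_cong_AE[OF _ Lsp_ehat Lsp_ehat Lsp_Bop[OF gs]]) auto
  also have "\<dots> = Qf (ehat (0,0)) gs" by (simp add: Qf_def)
  also have "\<dots> = cnj (Qf gs (ehat (0,0)))" by (rule Qf_herm[OF Lsp_ehat gs])
  also have "Qf gs (ehat (0,0)) = 0" unfolding Qf_def z by (simp add: l2inner_NN)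
  finally show False by simp
qed

lemma Qf_cs: assumes "Lsp x" "Lsp y"
  shows "(cmod (Qf x y))\<^sup>2 \<le> Re (Qf x x) * Re (Qf y y)"
proof (rule cs_form[OF Qf_lin _ _ assms])
  show "Qf y x = cnj (Qf x y)" if "Lsp x" "Lsp y" for x y using Qf_herm[OF that(2,1)] .
  show "0 \<le> Re (Qf x x)" if "Lsp x" for x
    using Qf_bounds(1)[OF that] dl_pos by (meson mult_nonneg_nonneg order.trans less_imp_le zero_le_power2)
qed

end

theorem corollary4p13:
  fixes eps :: real and u p1 p2 :: "int \<times> int \<Rightarrow> real"
    and k :: "real \<times> real" and lam :: real
  assumes eps: "eps \<ge> 0"
    and u_nonneg: "\<forall>x. u x \<ge> 0"
    and u_summ: "u summable_on UNIV"
    and u_rot: "\<forall>z. u (rot90 z) = u z"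
    and p1_rot: "\<forall>z. p1 (rot90 z) = p1 z"
    and p2_rot: "\<forall>z. p2 (rot90 z) = p2 z"
    and p_exp: "\<exists>\<alpha>0>0. (\<lambda>z. exp (\<alpha>0 * znorm z) * \<bar>p1 z\<bar>) summable_on UNIV \<and>
                        (\<lambda>z. exp (\<alpha>0 * znorm z) * \<bar>p2 z\<bar>) summable_on UNIV"
    and p2_supp: "\<forall>z. \<not> (even (fst z) \<and> even (snd z)) \<longrightarrow> p2 z = 0"
    and p_nz: "(\<lambda>z. p1 z + p2 z) \<noteq> (\<lambda>z. 0)"
    and p_nondeg: "\<forall>q\<in>T2. \<exists>x. complex_of_real (p2 x) \<noteq>
                      - exp (\<i> * of_real (dotp q x / 2)) * complex_of_real (p1 x)"
    and k: "k \<in> T2"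
    and lam: "lam < zzk eps k"
  shows "Tinf eps u p1 p2 k lam \<in> \<real> \<and> Re (Tinf eps u p1 p2 k lam) \<ge> 0 \<and>
    (\<forall>U::real. U \<ge> 0 \<longrightarrow>
       (let D = TT eps u p1 p2 U k lam - Tinf eps u p1 p2 k lam;
            B = Rdd eps u p1 p2 k lam / (1 + of_real U * Rss eps u k lam)
        in D \<in> \<real> \<and> B \<in> \<real> \<and> 0 \<le> Re D \<and> Re D \<le> Re B))"
proof -
  obtain \<alpha>0 where a0: "\<alpha>0 > 0" and s1: "(\<lambda>z. exp (\<alpha>0 * znorm z) * \<bar>p1 z\<bar>) summable_on UNIV"
    and s2: "(\<lambda>z. exp (\<alpha>0 * znorm z) * \<bar>p2 z\<bar>) summable_on UNIV"
    using p_exp by blast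
  have p1s: "(\<lambda>x. \<bar>p1 x\<bar>) summable_on UNIV" by (rule summable_from_exp[OF a0 s1])
  have p2s: "(\<lambda>x. \<bar>p2 x\<bar>) summable_on UNIV" by (rule summable_from_exp[OF a0 s2])
  define m where "m = (\<lambda>p. ffk eps k p - lam)"
  define dl where "dl = zzk eps k - lam"
  define Mx where "Mx = 8 * eps - lam"
  interpret B: bctx u m dl Mx
  proof unfold_locales
    show "0 \<le> u x" for x using u_nonneg by blast
    show "u summable_on UNIV" by (rule u_summ)
    show "m \<in> borel_measurable NN" unfolding m_def by (rule ffk_meas)
    show "dl > 0" using lam by (simp add: dl_def)
    show "dl \<le> m p" for p using ffk_bounds(1)[OF eps k, of p] unfolding dl_def m_def by simp
    show "m p \<le> Mx" for p using ffk_bounds(2)[OF eps k, of p] unfolding Mx_def m_def by simp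
  qed
  define d where "d = ddk p1 p2 k"
  have Ld: "Lsp d" unfolding d_def by (rule Lsp_ddk[OF p1s p2s])
  have Ls: "Lsp sone" using Lsp_ehat by (simp add: sone_ehat)
  obtain gs where gs: "Lsp gs" "AE p in NN. B.Bop gs p = sone p" using B.exists_sol[OF Ls] by blast
  obtain gd where gd: "Lsp gd" "AE p in NN. B.Bop gd p = d p" using B.exists_sol[OF Ld] by blast
  have gsAU: "AE p in NN. B.AU 0 gs p = sone p" using gs(2) by (simp add: B.AU0)
  have gdAU: "AE p in NN. B.AU 0 gd p = d p" using gd(2) by (simp add: B.AU0)
  have Rss: "Rss eps u k lam = l2inner sone gs"
    unfolding Rss_def by (rule B.rform_eval[OF m_def order_refl Ls Ls gs(1) gsAU])
  have Rsd: "Rsd eps u p1 p2 k lam = l2inner sone gd"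
    unfolding Rsd_def d_def[symmetric] by (rule B.rform_eval[OF m_def order_refl Ls Ld gd(1) gdAU])
  have Rdd: "Rdd eps u p1 p2 k lam = l2inner d gd"
    unfolding Rdd_def d_def[symmetric] by (rule B.rform_eval[OF m_def order_refl Ld Ld gd(1) gdAU])
  have gs_e0: "AE p in NN. B.Bop gs p = ehat (0,0) p" using gs(2) by (simp add: sone_ehat)
  have q1: "l2inner sone g = B.Qf gs g" if "Lsp g" for g by (rule B.ip_first_sol[OF Ls gs(1) that gs(2)])
  have q2: "l2inner d g = B.Qf gd g" if "Lsp g" for g by (rule B.ip_first_sol[OF Ld gd(1) that gd(2)])
  define s where "s = Re (B.Qf gs gs)"
  define d0 where "d0 = Re (B.Qf gd gd)"
  define R where "R = B.Qf gs gd"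
  have Rss': "Rss eps u k lam = of_real s"
    unfolding Rss q1[OF gs(1)] s_def by (rule B.Qf_real[OF gs(1)])
  have Rdd': "Rdd eps u p1 p2 k lam = of_real d0"
    unfolding Rdd q2[OF gd(1)] d0_def by (rule B.Qf_real[OF gd(1)])
  have Rsd': "Rsd eps u p1 p2 k lam = R"
    unfolding Rsd q1[OF gd(1)] R_def ..
  have sp: "s > 0" unfolding s_def by (rule B.Qf_pos_sol[OF gs(1) gs_e0])
  have cs: "(cmod R)\<^sup>2 \<le> s * d0" unfolding R_def s_def d0_def by (rule B.Qf_cs[OF gs(1) gd(1)])
  have dgs: "l2inner d gs = cnj R"
    unfolding q2[OF gs(1)] R_def by (rule B.Qf_herm[OF gd(1) gs(1)])
  have TTe: "TT eps u p1 p2 U k lam = of_real d0 - (of_real U * R / (1 + of_real U * of_real s)) * cnj R"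
    if U: "0 \<le> U" for U
  proof -
    define \<beta> where "\<beta> = of_real U * R / (1 + of_real U * of_real s)"
    define gU where "gU = (\<lambda>p. gd p - \<beta> * gs p)"
    have LgU: "Lsp gU" unfolding gU_def by (rule Lsp_lincomb[OF gd(1) gs(1)])
    have pos: "1 + U * s > 0" using U sp by (simp add: add_pos_nonneg)
    have ne: "1 + of_real U * of_real s \<noteq> (0::complex)"
    proof -
      have e: "(1 + of_real U * of_real s :: complex) = of_real (1 + U * s)" by simp
      have "1 + U * s \<noteq> 0" using pos by simp
      then show ?thesis unfolding e by (simp only: of_real_eq_0_iff) simp
    qed
    have bdef: "\<beta> * (1 + of_real U * of_real s) = of_real U * R"
      unfolding \<beta>_def using ne by simp
    have ipe0: "l2inner (ehat (0,0)) gU = R - \<beta> * of_real s"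
    proof -
      have "l2inner (ehat (0,0)) gU = l2inner (ehat (0,0)) gd - \<beta> * l2inner (ehat (0,0)) gs"
        unfolding gU_def by (rule ip_lincomb[OF Lsp_ehat gd(1) gs(1)])
      also have "l2inner (ehat (0,0)) gd = R" using q1[OF gd(1)] by (simp add: sone_ehat R_def)
      also have "l2inner (ehat (0,0)) gs = of_real s"
        using q1[OF gs(1)] B.Qf_real[OF gs(1)] by (simp add: sone_ehat s_def)
      finally show ?thesis .
    qed
    have eqU: "AE p in NN. B.AU U gU p = d p"
      using gs(2) gd(2)
    proof eventually_elim
      case (elim p)
      have "B.AU U gU p = B.Bop gd p - \<beta> * B.Bop gs p + of_real U * (R - \<beta> * of_real s)"
        unfolding B.AU_def gU_def B.Bop_lin[OF gd(1) gs(1)] ipe0[unfolded gU_def] by simp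
      also have "\<dots> = d p - \<beta> + of_real U * (R - \<beta> * of_real s)"
        using elim by (simp add: sone_def)
      also have "\<dots> = d p + (of_real U * R - \<beta> * (1 + of_real U * of_real s))"
        by (simp add: algebra_simps)
      also have "\<dots> = d p" by (simp add: bdef)
      finally show ?case .
    qed
    have "TT eps u p1 p2 U k lam = l2inner d gU"
      unfolding TT_def d_def[symmetric] by (rule B.rform_eval[OF m_def U Ld Ld LgU eqU])
    also have "\<dots> = l2inner d gd - \<beta> * l2inner d gs"
      unfolding gU_def by (rule ip_lincomb[OF Ld gd(1) gs(1)])
    also have "\<dots> = of_real d0 - \<beta> * cnj R"
      using Rdd Rdd' dgs by simp
    finally show ?thesis unfolding \<beta>_def .
  qed
  show ?thesis
  proof (intro conjI allI impI)
    show "Tinf eps u p1 p2 k lam \<in> \<real>"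
      using final_alg[OF sp order_refl cs] unfolding Tinf_def Rss' Rdd' Rsd' by simp
    show "0 \<le> Re (Tinf eps u p1 p2 k lam)"
      using final_alg[OF sp order_refl cs] unfolding Tinf_def Rss' Rdd' Rsd' by simp
    fix U :: real assume U: "0 \<le> U"
    show "let D = TT eps u p1 p2 U k lam - Tinf eps u p1 p2 k lam;
            B = Rdd eps u p1 p2 k lam / (1 + of_real U * Rss eps u k lam)
        in D \<in> \<real> \<and> B \<in> \<real> \<and> 0 \<le> Re D \<and> Re D \<le> Re B"
      using final_alg[OF sp U cs] unfolding Tinf_def Rss' Rdd' Rsd' TTe[OF U] by (simp only: conj_assoc)
  qed
qed

end
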